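(* Let $G\subset\mathrm{Homeo}_+([0,1])$ be a group without linked fixed points, and let $I^\infty(G)=\bigcup_{n\ge0}I^n(G)$ where $I^0(G)=G$ and $I^{n+1}(G)=I(I^n(G))$. Then $I^\infty(G)$ is a complete group without linked fixed points, and moreover: (1) the orbits of $I^\infty(G)$ and of $G$ on $[0,1]$ coincide; (2) every pair of successive fixed points of $I^\infty(G)$ is a pair of successive fixed points of $G$; (3) for every pair $\{a,b\}$ of successive fixed points of some $f\in G$ and every relative translation number $\tau$ of $I^\infty(G)$ at $\{a,b\}$, one has $\tau(G_{[a,b]})=\tau(I^\infty(G)_{[a,b]})$; (4) every complete group without linked fixed points containing $G$ contains $I^\infty(G)$.
   Context: For a group $G$ of homeomorphisms of $[0,1]$, a pair of successive fixed points of $G$ is a pair $\{a,b\}$, $a<b$, such that $(a,b)$ is a connected component of $[0,1]\setminus \mathrm{Fix}(g)$ for some $g\in G$; two pairs $\{a,b\},\{c,d\}$ are linked if $(a,b)\cap\{c,d\}$ or $(c,d)\cap\{a,b\}$ consists of exactly one point; $G$ is without linked fixed points if no two such pairs are linked. A homeomorphism $h\in\mathrm{Homeo}_+([0,1])$ is induced by $g\in\mathrm{Homeo}_+([0,1])$ if $h(x)\in\{x,g(x)\}$ for every $x\in[0,1]$ (equivalently $h$ equals $g$ on a union of connected components of $[0,1]\setminus\mathrm{Fix}(g)$ and the identity elsewhere). For a group $G$, $I(G)$ denotes the group generated by all homeomorphisms induced by elements of $G$. A group without linked fixed points is complete if it contains every homeomorphism induced by any of its elements. For a group $H$ without linked fixed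 points and a pair $\{a,b\}$ of successive fixed points, $H_{[a,b]}$ is the stabilizer of $[a,b]$ in $H$, and a relative translation number at $\{a,b\}$ is a group morphism $\tau:H_{[a,b]}\to\mathbb R$ whose kernel is the set of elements having a fixed point in $(a,b)$ and with $\tau(g)>0$ iff $g(x)>x$ on $(a,b)$ (such a morphism exists and is unique up to a positive factor). *)

theory Defs
  imports "HOL-Analysis.Analysis"
begin

text \<open>Elements of Homeo_+([0,1]) are represented as functions real => real that
are increasing homeomorphisms of [0,1] and the identity outside [0,1]
(so that composition and inv are the group operations).\<close>

definition homeo_plus :: "(real \<Rightarrow> real) \<Rightarrow> bool" where
  "homeo_plus f \<longleftrightarrow> continuous_on {0..1} f \<and> strict_mono_on {0..1} f
     \<and> f ` {0..1} = {0..1} \<and> (\<forall>x. x \<notin> {0..1} \<longrightarrow> f x = x)"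

definition homeo_group :: "(real \<Rightarrow> real) set \<Rightarrow> bool" where
  "homeo_group G \<longleftrightarrow> (\<forall>g\<in>G. homeo_plus g) \<and> id \<in> G
     \<and> (\<forall>f\<in>G. \<forall>g\<in>G. f \<circ> g \<in> G) \<and> (\<forall>g\<in>G. inv g \<in> G)"

definition fixset :: "(real \<Rightarrow> real) \<Rightarrow> real set" where
  "fixset g = {x \<in> {0..1}. g x = x}"

definition succ_pair :: "(real \<Rightarrow> real) set \<Rightarrow> real \<Rightarrow> real \<Rightarrow> bool" where
  "succ_pair G a b \<longleftrightarrow> a < b \<and>
     (\<exists>g\<in>G. {a<..<b} \<in> components ({0..1} - fixset g))"

definition linked :: "real \<Rightarrow> real \<Rightarrow> real \<Rightarrow> real \<Rightarrow> bool" where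
  "linked a b c d \<longleftrightarrow> card ({a<..<b} \<inter> {c, d}) = 1 \<or> card ({c<..<d} \<inter> {a, b}) = 1"

definition no_linked_fixed_points :: "(real \<Rightarrow> real) set \<Rightarrow> bool" where
  "no_linked_fixed_points G \<longleftrightarrow>
     (\<forall>a b c d. succ_pair G a b \<longrightarrow> succ_pair G c d \<longrightarrow> \<not> linked a b c d)"

definition induced_by :: "(real \<Rightarrow> real) \<Rightarrow> (real \<Rightarrow> real) \<Rightarrow> bool" where
  "induced_by h g \<longleftrightarrow> homeo_plus h \<and> (\<forall>x\<in>{0..1}. h x = x \<or> h x = g x)"

definition gen_group :: "(real \<Rightarrow> real) set \<Rightarrow> (real \<Rightarrow> real) set" where
  "gen_group S = \<Inter> {H. homeo_group H \<and> S \<subseteq> H}"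

definition I_op :: "(real \<Rightarrow> real) set \<Rightarrow> (real \<Rightarrow> real) set" where
  "I_op G = gen_group {h. \<exists>g\<in>G. induced_by h g}"

definition I_infty :: "(real \<Rightarrow> real) set \<Rightarrow> (real \<Rightarrow> real) set" where
  "I_infty G = (\<Union>n. (I_op ^^ n) G)"

definition complete_group :: "(real \<Rightarrow> real) set \<Rightarrow> bool" where
  "complete_group G \<longleftrightarrow> homeo_group G \<and> no_linked_fixed_points G \<and>
     (\<forall>g\<in>G. \<forall>h. induced_by h g \<longrightarrow> h \<in> G)"

definition stab :: "(real \<Rightarrow> real) set \<Rightarrow> real \<Rightarrow> real \<Rightarrow> (real \<Rightarrow> real) set" where
  "stab H a b = {h \<in> H. h ` {a..b} = {a..b}}"

definition rel_transl_number ::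
    "(real \<Rightarrow> real) set \<Rightarrow> real \<Rightarrow> real \<Rightarrow> ((real \<Rightarrow> real) \<Rightarrow> real) \<Rightarrow> bool" where
  "rel_transl_number H a b \<tau> \<longleftrightarrow>
     (\<forall>g\<in>stab H a b. \<forall>h\<in>stab H a b. \<tau> (g \<circ> h) = \<tau> g + \<tau> h) \<and>
     (\<forall>g\<in>stab H a b. \<tau> g = 0 \<longleftrightarrow> (\<exists>x\<in>{a<..<b}. g x = x)) \<and>
     (\<forall>g\<in>stab H a b. \<tau> g > 0 \<longleftrightarrow> (\<forall>x\<in>{a<..<b}. g x > x))"

end

theory Submission
  imports Defs
begin

lemma hp_maps: "homeo_plus f \<Longrightarrow> x \<in> {0..1} \<Longrightarrow> f x \<in> {0..1}"
  unfolding homeo_plus_def by blast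

lemma hp_out: "homeo_plus f \<Longrightarrow> x \<notin> {0..1} \<Longrightarrow> f x = x"
  unfolding homeo_plus_def by blast

lemma hp_strict_mono:
  assumes "homeo_plus f" shows "strict_mono f"
proof (rule strict_monoI)
  fix x y :: real assume xy: "x < y"
  have sm: "strict_mono_on {0..1} f" using assms unfolding homeo_plus_def by blast
  show "f x < f y"
  proof (cases "x \<in> {0..1}")
    case True
    show ?thesis
    proof (cases "y \<in> {0..1}")
      case True with \<open>x \<in> {0..1}\<close> xy sm show ?thesis by (simp add: strict_mono_on_def)
    next
      case False
      then have "y > 1" using xy True by auto
      moreover have "f x \<le> 1" using hp_maps[OF assms True] by auto
      ultimately show ?thesis using hp_out[OF assms False] by simp
    qed
  next
    case False
    show ?thesis
    proof (cases "y \<in> {0..1}")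
      case True
      then have "x < 0" using xy False by auto
      moreover have "f y \<ge> 0" using hp_maps[OF assms True] by auto
      ultimately show ?thesis using hp_out[OF assms False] by simp
    next
      case False2: False
      then show ?thesis using hp_out[OF assms False] hp_out[OF assms False2] xy by simp
    qed
  qed
qed

lemma hp_surj:
  assumes "homeo_plus f" shows "surj f"
proof -
  { fix z :: real
    have "\<exists>y. f y = z"
    proof (cases "z \<in> {0..1}")
      case True
      then have "z \<in> f ` {0..1}" using assms unfolding homeo_plus_def by simp
      then show ?thesis by auto
    next
      case False then show ?thesis using hp_out[OF assms False] by auto
    qed }
  then show ?thesis unfolding surj_def by metis
qed

lemma hp_bij: "homeo_plus f \<Longrightarrow> bij f"
  unfolding bij_def using hp_surj strict_mono_imp_inj_on[OF hp_strict_mono] by auto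

lemma hp_inv1: "homeo_plus f \<Longrightarrow> inv f (f x) = x"
  by (simp add: hp_bij bij_is_inj inv_f_f)

lemma hp_inv2: "homeo_plus f \<Longrightarrow> f (inv f x) = x"
  by (simp add: hp_surj surj_f_inv_f)

lemma hp_less_iff: "homeo_plus f \<Longrightarrow> f x < f y \<longleftrightarrow> x < y"
  using hp_strict_mono strict_mono_less by metis

lemma hp_le_iff: "homeo_plus f \<Longrightarrow> f x \<le> f y \<longleftrightarrow> x \<le> y"
  using hp_strict_mono strict_mono_less_eq by metis

lemma hp_eq_iff: "homeo_plus f \<Longrightarrow> f x = f y \<longleftrightarrow> x = y"
  using hp_inv1 by metis

lemma hp_0: "homeo_plus f \<Longrightarrow> f 0 = 0"
proof -
  assume h: "homeo_plus f"
  have "(0::real) \<in> f ` {0..1}" using h unfolding homeo_plus_def by auto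
  then obtain y where y: "y \<in> {0..1}" "f y = 0" by auto
  have "f 0 \<le> f y" using y(1) hp_le_iff[OF h, of 0 y] by auto
  moreover have "f 0 \<ge> 0" using hp_maps[OF h] by auto
  ultimately show ?thesis using y by auto
qed

lemma hp_1: "homeo_plus f \<Longrightarrow> f 1 = 1"
proof -
  assume h: "homeo_plus f"
  have "(1::real) \<in> f ` {0..1}" using h unfolding homeo_plus_def by auto
  then obtain y where y: "y \<in> {0..1}" "f y = 1" by auto
  have "f y \<le> f 1" using y(1) hp_le_iff[OF h, of y 1] by auto
  moreover have "f 1 \<le> 1" using hp_maps[OF h] by auto
  ultimately show ?thesis using y by auto
qed

lemma hp_image_oo: "homeo_plus f \<Longrightarrow> f ` {c<..<d} = {f c<..<f d}"
proof -
  assume h: "homeo_plus f"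
  show ?thesis
  proof
    show "f ` {c<..<d} \<subseteq> {f c<..<f d}" using hp_less_iff[OF h] by auto
    show "{f c<..<f d} \<subseteq> f ` {c<..<d}"
    proof
      fix z assume z: "z \<in> {f c<..<f d}"
      have "z = f (inv f z)" using hp_inv2[OF h] by simp
      then show "z \<in> f ` {c<..<d}" using z hp_less_iff[OF h, of c "inv f z"] hp_less_iff[OF h, of "inv f z" d]
        by (metis greaterThanLessThan_iff imageI)
    qed
  qed
qed

lemma hp_image_cc: "homeo_plus f \<Longrightarrow> f ` {c..d} = {f c..f d}"
proof -
  assume h: "homeo_plus f"
  show ?thesis
  proof
    show "f ` {c..d} \<subseteq> {f c..f d}" using hp_le_iff[OF h] by auto
    show "{f c..f d} \<subseteq> f ` {c..d}"
    proof
      fix z assume z: "z \<in> {f c..f d}"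
      have "z = f (inv f z)" using hp_inv2[OF h] by simp
      then show "z \<in> f ` {c..d}" using z hp_le_iff[OF h, of c "inv f z"] hp_le_iff[OF h, of "inv f z" d]
        by (metis atLeastAtMost_iff imageI)
    qed
  qed
qed

lemma hp_cont: "homeo_plus f \<Longrightarrow> continuous_on {0..1} f"
  unfolding homeo_plus_def by blast

lemma hp_inv: assumes h: "homeo_plus f" shows "homeo_plus (inv f)"
proof -
  have img: "f ` {0..1} = {0..1}" using h unfolding homeo_plus_def by blast
  have "continuous_on (f ` {0..1}) (inv f)"
    by (rule continuous_on_inv[OF hp_cont[OF h]]) (auto simp: hp_inv1[OF h])
  then have c: "continuous_on {0..1} (inv f)" using img by simp
  have sm: "strict_mono (inv f)"
    by (metis h hp_inv2 hp_less_iff strict_monoI)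
  have im: "inv f ` {0..1} = {0..1}"
    using img by (metis h hp_bij bij_is_inj image_inv_f_f)
  have out: "\<forall>x. x \<notin> {0..1} \<longrightarrow> inv f x = x"
    using hp_out[OF h] by (metis h hp_inv1)
  show ?thesis unfolding homeo_plus_def using c sm im out
    by (simp add: strict_mono_on_def strict_mono_def)
qed

lemma hp_comp: assumes f: "homeo_plus f" and g: "homeo_plus g" shows "homeo_plus (f \<circ> g)"
proof -
  have ig: "g ` {0..1} = {0..1}" and iff: "f ` {0..1} = {0..1}"
    using f g unfolding homeo_plus_def by blast+
  have c: "continuous_on {0..1} (f \<circ> g)"
    by (rule continuous_on_compose) (use hp_cont[OF f] hp_cont[OF g] ig in auto)
  have sm: "strict_mono (f \<circ> g)" using hp_strict_mono[OF f] hp_strict_mono[OF g]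
    by (simp add: strict_mono_def)
  have "(f \<circ> g) ` {0..1} = {0..1}" using ig iff by (metis image_comp)
  then show ?thesis unfolding homeo_plus_def using c sm hp_out[OF f] hp_out[OF g]
    by (simp add: strict_mono_on_def strict_mono_def)
qed

lemma hp_id: "homeo_plus id"
  unfolding homeo_plus_def by (simp add: strict_mono_on_def continuous_on_id)


lemma hg_hp: "homeo_group G \<Longrightarrow> g \<in> G \<Longrightarrow> homeo_plus g"
  unfolding homeo_group_def by blast
lemma hg_id: "homeo_group G \<Longrightarrow> id \<in> G"
  unfolding homeo_group_def by blast
lemma hg_comp: "homeo_group G \<Longrightarrow> f \<in> G \<Longrightarrow> g \<in> G \<Longrightarrow> f \<circ> g \<in> G"
  unfolding homeo_group_def by blast
lemma hg_inv: "homeo_group G \<Longrightarrow> g \<in> G \<Longrightarrow> inv g \<in> G"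
  unfolding homeo_group_def by blast

lemma hg_all: "homeo_group {f. homeo_plus f}"
  unfolding homeo_group_def using hp_comp hp_inv hp_id by auto

lemma gen_group_sub: "homeo_group H \<Longrightarrow> S \<subseteq> H \<Longrightarrow> gen_group S \<subseteq> H"
  unfolding gen_group_def by blast

lemma gen_group_incl: "S \<subseteq> gen_group S"
  unfolding gen_group_def by blast

lemma gen_group_hg: assumes "S \<subseteq> {f. homeo_plus f}" shows "homeo_group (gen_group S)"
proof -
  let ?F = "{H. homeo_group H \<and> S \<subseteq> H}"
  have ne: "{f. homeo_plus f} \<in> ?F" using hg_all assms by blast
  have e: "gen_group S = \<Inter>?F" unfolding gen_group_def by simp
  show ?thesis unfolding e homeo_group_def[of "\<Inter>?F"]
  proof (intro conjI)
    show "\<forall>g\<in>\<Inter>?F. homeo_plus g" using ne by blast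
    show "id \<in> \<Inter>?F" using hg_id by blast
    show "\<forall>f\<in>\<Inter>?F. \<forall>g\<in>\<Inter>?F. f \<circ> g \<in> \<Inter>?F" using hg_comp by blast
    show "\<forall>g\<in>\<Inter>?F. inv g \<in> \<Inter>?F" using hg_inv by blast
  qed
qed

definition cmp :: "(real \<Rightarrow> real) list \<Rightarrow> real \<Rightarrow> real" where
  "cmp hs = foldr (\<circ>) hs id"

lemma cmp_Nil[simp]: "cmp [] = id" by (simp add: cmp_def)
lemma cmp_Cons[simp]: "cmp (h # hs) = h \<circ> cmp hs" by (simp add: cmp_def)
lemma cmp_append: "cmp (xs @ ys) = cmp xs \<circ> cmp ys"
  by (induction xs) (auto simp: comp_assoc)

lemma cmp_hp: "\<forall>h\<in>set hs. homeo_plus h \<Longrightarrow> homeo_plus (cmp hs)"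
  by (induction hs) (auto simp: hp_id hp_comp)

lemma cmp_inv: "\<forall>h\<in>set hs. homeo_plus h \<Longrightarrow> inv (cmp hs) = cmp (rev (map inv hs))"
proof (induction hs)
  case Nil then show ?case by (simp add: inv_id)
next
  case (Cons h hs)
  have "inv (h \<circ> cmp hs) = inv (cmp hs) \<circ> inv h"
    by (rule o_inv_distrib) (use Cons.prems hp_bij cmp_hp in auto)
  then have "inv (cmp (h # hs)) = inv (cmp hs) \<circ> inv h" by (simp only: cmp_Cons)
  also have "\<dots> = cmp (rev (map inv hs)) \<circ> inv h" using Cons.IH Cons.prems by simp
  also have "\<dots> = cmp (rev (map inv (h # hs)))" by (simp add: cmp_append)
  finally show ?case .
qed

definition Ind :: "(real \<Rightarrow> real) set \<Rightarrow> (real \<Rightarrow> real) set" where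
  "Ind K = {h. \<exists>g\<in>K. induced_by h g}"

lemma induced_hp: "induced_by h g \<Longrightarrow> homeo_plus h"
  unfolding induced_by_def by blast

lemma induced_inv:
  assumes g: "homeo_plus g" and h: "induced_by h g" shows "induced_by (inv h) (inv g)"
proof -
  have hh: "homeo_plus h" using h induced_hp by blast
  have "\<forall>x\<in>{0..1}. inv h x = x \<or> inv h x = inv g x"
  proof
    fix x :: real assume x: "x \<in> {0..1}"
    let ?y = "inv h x"
    have y: "?y \<in> {0..1}" using hp_maps[OF hp_inv[OF hh] x] .
    have hy: "h ?y = x" using hp_inv2[OF hh] .
    from h y have "h ?y = ?y \<or> h ?y = g ?y" unfolding induced_by_def by blast
    then show "inv h x = x \<or> inv h x = inv g x"
      using hy hp_inv1[OF g] by metis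
  qed
  then show ?thesis unfolding induced_by_def using hp_inv[OF hh] by blast
qed

lemma Ind_inv: "homeo_group K \<Longrightarrow> h \<in> Ind K \<Longrightarrow> inv h \<in> Ind K"
  unfolding Ind_def using induced_inv hg_hp hg_inv by blast

lemma Ind_hp: "h \<in> Ind K \<Longrightarrow> homeo_plus h"
  unfolding Ind_def using induced_hp by blast

lemma Ind_incl: "homeo_group K \<Longrightarrow> K \<subseteq> Ind K"
  unfolding Ind_def induced_by_def using hg_hp by blast

lemma I_op_alt: "I_op K = gen_group (Ind K)"
  unfolding I_op_def Ind_def by simp

lemma I_op_hg: "homeo_group (I_op K)"
  unfolding I_op_alt by (rule gen_group_hg) (use Ind_hp in blast)

lemma I_op_incl: "homeo_group K \<Longrightarrow> K \<subseteq> I_op K"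
  unfolding I_op_alt using Ind_incl gen_group_incl by blast

lemma Ind_sub_I_op: "Ind K \<subseteq> I_op K"
  unfolding I_op_alt using gen_group_incl by blast

lemma I_op_words:
  assumes K: "homeo_group K" and w: "w \<in> I_op K"
  shows "\<exists>hs. set hs \<subseteq> Ind K \<and> w = cmp hs"
proof -
  let ?P = "{cmp hs | hs. set hs \<subseteq> Ind K}"
  have "homeo_group ?P" unfolding homeo_group_def
  proof (intro conjI ballI)
    fix g assume "g \<in> ?P" then show "homeo_plus g" using cmp_hp Ind_hp by blast
  next
    show "id \<in> ?P" by (rule CollectI, rule exI[of _ "[]"]) simp
  next
    fix f g assume "f \<in> ?P" "g \<in> ?P"
    then obtain xs ys where "set xs \<subseteq> Ind K" "f = cmp xs" "set ys \<subseteq> Ind K" "g = cmp ys" by blast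
    then show "f \<circ> g \<in> ?P" by (intro CollectI exI[of _ "xs @ ys"]) (auto simp: cmp_append)
  next
    fix g assume "g \<in> ?P"
    then obtain xs where xs: "set xs \<subseteq> Ind K" "g = cmp xs" by blast
    then have "inv g = cmp (rev (map inv xs))" using cmp_inv Ind_hp by blast
    moreover have "set (rev (map inv xs)) \<subseteq> Ind K" using xs Ind_inv[OF K] by auto
    ultimately show "inv g \<in> ?P" by blast
  qed
  moreover have "Ind K \<subseteq> ?P"
  proof
    fix h assume "h \<in> Ind K" then show "h \<in> ?P" by (intro CollectI exI[of _ "[h]"]) auto
  qed
  ultimately have "I_op K \<subseteq> ?P" unfolding I_op_alt by (rule gen_group_sub)
  then show ?thesis using w by blast
qed


section \<open>Successive fixed points\<close>

definition fixfree :: "(real \<Rightarrow> real) \<Rightarrow> real \<Rightarrow> real \<Rightarrow> bool" where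
  "fixfree f c d \<longleftrightarrow> 0 \<le> c \<and> c < d \<and> d \<le> 1 \<and> f c = c \<and> f d = d \<and> (\<forall>y\<in>{c<..<d}. f y \<noteq> y)"

lemma comp_iff:
  assumes cd: "c < d"
  shows "{c<..<d} \<in> components ({0..1} - fixset f) \<longleftrightarrow> fixfree f c d"
proof
  let ?S = "{0..1} - fixset f"
  assume C: "{c<..<d} \<in> components ?S"
  then have sub: "{c<..<d} \<subseteq> ?S"
    and mx: "\<And>D. D \<noteq> {} \<Longrightarrow> {c<..<d} \<subseteq> D \<Longrightarrow> D \<subseteq> ?S \<Longrightarrow> connected D \<Longrightarrow> D = {c<..<d}"
    unfolding in_components_maximal by blast+
  have inside: "\<And>y. c < y \<Longrightarrow> y < d \<Longrightarrow> 0 \<le> y \<and> y \<le> 1 \<and> f y \<noteq> y"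
    using sub unfolding fixset_def by auto
  have c0: "0 \<le> c"
  proof (rule ccontr)
    assume "\<not> 0 \<le> c"
    then have "c < (c + min d 0)/2" "(c + min d 0)/2 < d" "(c + min d 0)/2 < 0" using cd by auto
    then show False using inside[of "(c + min d 0)/2"] by linarith
  qed
  have d1: "d \<le> 1"
  proof (rule ccontr)
    assume "\<not> d \<le> 1"
    then have "c < (d + max c 1)/2" "(d + max c 1)/2 < d" "(d + max c 1)/2 > 1" using cd by auto
    then show False using inside[of "(d + max c 1)/2"] by linarith
  qed
  have fc: "f c = c"
  proof (rule ccontr)
    assume ne: "f c \<noteq> c"
    have "{c..<d} = {c<..<d}"
    proof (rule mx)
      show "{c..<d} \<noteq> {}" using cd by auto
      show "{c<..<d} \<subseteq> {c..<d}" by auto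
      show "{c..<d} \<subseteq> ?S"
      proof
        fix x assume "x \<in> {c..<d}"
        then show "x \<in> ?S" using inside[of x] ne c0 d1 unfolding fixset_def by (cases "x = c") auto
      qed
      show "connected {c..<d}" using is_interval_connected_1 is_interval_1 by fastforce
    qed
    then show False using cd by (metis atLeastLessThan_iff greaterThanLessThan_iff order_refl less_irrefl)
  qed
  have fd: "f d = d"
  proof (rule ccontr)
    assume ne: "f d \<noteq> d"
    have "{c<..d} = {c<..<d}"
    proof (rule mx)
      show "{c<..d} \<noteq> {}" using cd by auto
      show "{c<..<d} \<subseteq> {c<..d}" by auto
      show "{c<..d} \<subseteq> ?S"
      proof
        fix x assume "x \<in> {c<..d}"
        then show "x \<in> ?S" using inside[of x] ne c0 d1 cd unfolding fixset_def by (cases "x = d") auto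
      qed
      show "connected {c<..d}" using is_interval_connected_1 is_interval_1 by fastforce
    qed
    then show False using cd by (metis greaterThanAtMost_iff greaterThanLessThan_iff order_refl less_irrefl)
  qed
  show "fixfree f c d" unfolding fixfree_def using c0 d1 fc fd cd inside by auto
next
  let ?S = "{0..1} - fixset f"
  assume F: "fixfree f c d"
  then have c0: "0 \<le> c" and d1: "d \<le> 1" and fc: "f c = c" and fd: "f d = d"
    and ff: "\<forall>y\<in>{c<..<d}. f y \<noteq> y" unfolding fixfree_def by auto
  show "{c<..<d} \<in> components ?S"
    unfolding in_components_maximal
  proof (intro conjI allI impI)
    show "{c<..<d} \<noteq> {}" using cd by auto
    show "{c<..<d} \<subseteq> ?S" using ff c0 d1 unfolding fixset_def by auto
    show "connected {c<..<d}" by simp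
    fix D assume D: "D \<noteq> {} \<and> {c<..<d} \<subseteq> D \<and> D \<subseteq> ?S \<and> connected D"
    then have iv: "\<And>a b x. a \<in> D \<Longrightarrow> b \<in> D \<Longrightarrow> a \<le> x \<Longrightarrow> x \<le> b \<Longrightarrow> x \<in> D"
      using is_interval_connected_1 is_interval_1 by blast
    have "(c+d)/2 \<in> {c<..<d}" using cd by auto
    then have m: "(c+d)/2 \<in> D" using D by blast
    have cnot: "c \<notin> D" "d \<notin> D" using D fc fd c0 d1 cd unfolding fixset_def by auto
    have "D \<subseteq> {c<..<d}"
    proof
      fix y assume y: "y \<in> D"
      have "\<not> y \<ge> d" using iv[OF m y, of d] cnot cd by auto
      moreover have "\<not> y \<le> c" using iv[OF y m, of c] cnot cd by auto
      ultimately show "y \<in> {c<..<d}" by auto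
    qed
    then show "D = {c<..<d}" using D by blast
  qed
qed

lemma succ_iff: "succ_pair K c d \<longleftrightarrow> (\<exists>f\<in>K. fixfree f c d)"
  unfolding succ_pair_def using comp_iff fixfree_def by blast

definition Fset :: "(real \<Rightarrow> real) set \<Rightarrow> real set set" where
  "Fset K = {{c<..<d} | c d. succ_pair K c d}"

lemma Fset_mono: "K \<subseteq> K' \<Longrightarrow> Fset K \<subseteq> Fset K'"
  unfolding Fset_def succ_iff by blast

lemma succ_mono: "K \<subseteq> K' \<Longrightarrow> succ_pair K a b \<Longrightarrow> succ_pair K' a b"
  unfolding succ_iff by blast


lemma card_two_eq1:
  assumes "x \<noteq> y" shows "card (A \<inter> {x, y}) = 1 \<longleftrightarrow> (x \<in> A) \<noteq> (y \<in> A)"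
proof (cases "x \<in> A"; cases "y \<in> A")
  assume "x \<in> A" "y \<in> A" then have "A \<inter> {x,y} = {x,y}" by auto
  then show ?thesis using assms \<open>x \<in> A\<close> \<open>y \<in> A\<close> by simp
next
  assume "x \<in> A" "y \<notin> A" then have "A \<inter> {x,y} = {x}" by auto
  then show ?thesis using \<open>x \<in> A\<close> \<open>y \<notin> A\<close> by simp
next
  assume "x \<notin> A" "y \<in> A" then have "A \<inter> {x,y} = {y}" by auto
  then show ?thesis using \<open>x \<notin> A\<close> \<open>y \<in> A\<close> by simp
next
  assume "x \<notin> A" "y \<notin> A" then have "A \<inter> {x,y} = {}" by auto
  then show ?thesis using \<open>x \<notin> A\<close> \<open>y \<notin> A\<close> by simp
qed

lemma nolink_cases:
  assumes "c < d" "c' < d'" "\<not> linked c d c' d'"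
  shows "(c = c' \<and> d = d') \<or> d \<le> c' \<or> d' \<le> c \<or> (c < c' \<and> d' < d) \<or> (c' < c \<and> d < d')"
proof -
  have n1: "c \<noteq> d" and n2: "c' \<noteq> d'" using assms by auto
  have e1: "card ({c<..<d} \<inter> {c', d'}) = 1 \<longleftrightarrow> (c' \<in> {c<..<d}) \<noteq> (d' \<in> {c<..<d})"
    using n2 by (rule card_two_eq1)
  have e2: "card ({c'<..<d'} \<inter> {c, d}) = 1 \<longleftrightarrow> (c \<in> {c'<..<d'}) \<noteq> (d \<in> {c'<..<d'})"
    using n1 by (rule card_two_eq1)
  have l: "\<not> (((c' \<in> {c<..<d}) \<noteq> (d' \<in> {c<..<d})) \<or> ((c \<in> {c'<..<d'}) \<noteq> (d \<in> {c'<..<d'})))"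
    using assms(3) e1 e2 unfolding linked_def by blast
  have l1: "(c < c' \<and> c' < d) = (c < d' \<and> d' < d)" and l2: "(c' < c \<and> c < d') = (c' < d \<and> d < d')"
    using l unfolding greaterThanLessThan_iff by blast+
  show ?thesis
  proof (cases "d \<le> c' \<or> d' \<le> c")
    case True then show ?thesis by blast
  next
    case False
    then have o: "c' < d" "c < d'" by auto
    show ?thesis
    proof (cases "c < c'")
      case True
      then have "d' < d" using l1 o by blast
      then show ?thesis using True by blast
    next
      case False
      show ?thesis
      proof (cases "c' < c")
        case True
        then have "d < d'" using l2 o by blast
        then show ?thesis using True by blast
      next
        case False2: False
        then have "c = c'" using False by auto
        then have "\<not> d < d'" "\<not> d' < d" using l1 l2 o by auto
        then show ?thesis using \<open>c = c'\<close> by linarith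
      qed
    qed
  qed
qed

lemma nolinkD:
  assumes "no_linked_fixed_points K" "succ_pair K c d" "succ_pair K c' d'"
  shows "(c = c' \<and> d = d') \<or> d \<le> c' \<or> d' \<le> c \<or> (c < c' \<and> d' < d) \<or> (c' < c \<and> d < d')"
  using assms nolink_cases unfolding no_linked_fixed_points_def succ_pair_def by blast

lemma comp_around:
  assumes f: "homeo_plus f" and x: "x \<in> {0..1}" and fx: "f x \<noteq> x"
  shows "\<exists>c d. c < x \<and> x < d \<and> fixfree f c d"
proof -
  have cont: "continuous_on {0..1} (\<lambda>y. f y - y)"
    using hp_cont[OF f] by (intro continuous_intros)
  let ?A = "{y \<in> {0..x}. f y - y = 0}"
  let ?B = "{y \<in> {x..1}. f y - y = 0}"
  have cA: "closed ?A"
    by (rule continuous_closed_preimage_constant) (use cont x in \<open>auto intro: continuous_on_subset\<close>)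
  have cB: "closed ?B"
    by (rule continuous_closed_preimage_constant) (use cont x in \<open>auto intro: continuous_on_subset\<close>)
  have 0: "0 \<in> ?A" using hp_0[OF f] x by auto
  have 1: "1 \<in> ?B" using hp_1[OF f] x by auto
  have bA: "bdd_above ?A" by (rule bdd_aboveI[of _ x]) auto
  have bB: "bdd_below ?B" by (rule bdd_belowI[of _ x]) auto
  define c where "c = Sup ?A"
  define d where "d = Inf ?B"
  have cin: "c \<in> ?A" unfolding c_def using closed_contains_Sup[OF _ bA cA] 0 by blast
  have din: "d \<in> ?B" unfolding d_def using closed_contains_Inf[OF _ bB cB] 1 by blast
  have cx: "c < x" using cin fx by (cases "c = x") auto
  have dx: "x < d" using din fx by (cases "d = x") auto
  have "\<forall>y\<in>{c<..<d}. f y \<noteq> y"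
  proof
    fix y assume y: "y \<in> {c<..<d}"
    show "f y \<noteq> y"
    proof
      assume fy: "f y = y"
      show False
      proof (cases "y \<le> x")
        case True
        then have "y \<in> ?A" using fy y cin by auto
        then have "y \<le> c" unfolding c_def using bA by (rule cSup_upper)
        then show False using y by auto
      next
        case False
        then have "y \<in> ?B" using fy y din by auto
        then have "d \<le> y" unfolding d_def using bB by (rule cInf_lower)
        then show False using y by auto
      qed
    qed
  qed
  then have "fixfree f c d" unfolding fixfree_def using cin din cx dx by auto
  then show ?thesis using cx dx by blast
qed

lemma Fset_elim:
  assumes "A \<in> Fset K" obtains c d f where "A = {c<..<d}" "f \<in> K" "fixfree f c d" "succ_pair K c d"
  using assms unfolding Fset_def succ_iff by blast

lemma Fset_I: "succ_pair K c d \<Longrightarrow> {c<..<d} \<in> Fset K"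
  unfolding Fset_def by blast

lemma fixfree_conj:
  assumes u: "homeo_plus u" and f: "fixfree f c d"
  shows "fixfree (u \<circ> f \<circ> inv u) (u c) (u d)"
proof -
  from f have c0: "0 \<le> c" and cd: "c < d" and d1: "d \<le> 1" and fc: "f c = c" and fd: "f d = d"
    and ff: "\<forall>y\<in>{c<..<d}. f y \<noteq> y" unfolding fixfree_def by auto
  have "u c \<in> {0..1}" "u d \<in> {0..1}" using hp_maps[OF u] c0 cd d1 by auto
  moreover have "u c < u d" using cd hp_less_iff[OF u] by auto
  moreover have "(u \<circ> f \<circ> inv u) (u c) = u c" "(u \<circ> f \<circ> inv u) (u d) = u d"
    using fc fd hp_inv1[OF u] by auto
  moreover have "\<forall>y\<in>{u c<..<u d}. (u \<circ> f \<circ> inv u) y \<noteq> y"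
  proof
    fix y assume y: "y \<in> {u c<..<u d}"
    have "inv u y \<in> {c<..<d}" using y hp_less_iff[OF u, of c "inv u y"] hp_less_iff[OF u, of "inv u y" d]
      hp_inv2[OF u] by auto
    then have "f (inv u y) \<noteq> inv u y" using ff by blast
    then have "u (f (inv u y)) \<noteq> u (inv u y)" using hp_eq_iff[OF u] by blast
    then show "(u \<circ> f \<circ> inv u) y \<noteq> y" using hp_inv2[OF u] by simp
  qed
  ultimately show ?thesis unfolding fixfree_def by auto
qed

lemma succ_conj:
  assumes K: "homeo_group K" and u: "u \<in> K" and s: "succ_pair K c d"
  shows "succ_pair K (u c) (u d)"
proof -
  obtain f where f: "f \<in> K" "fixfree f c d" using s unfolding succ_iff by blast
  have "u \<circ> f \<circ> inv u \<in> K" using K u f hg_comp hg_inv by blast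
  then show ?thesis unfolding succ_iff using fixfree_conj[OF hg_hp[OF K u] f(2)] by blast
qed

lemma Fset_inv:
  assumes K: "homeo_group K" and u: "u \<in> K" and A: "A \<in> Fset K"
  shows "u ` A \<in> Fset K"
proof -
  obtain c d f where "A = {c<..<d}" "succ_pair K c d" using A by (rule Fset_elim)
  then show ?thesis using hp_image_oo[OF hg_hp[OF K u]] succ_conj[OF K u] Fset_I by metis
qed

lemma Fset_ne: "A \<in> Fset K \<Longrightarrow> A \<noteq> {}"
  by (erule Fset_elim) (auto simp: fixfree_def)

lemma Fset_sub: "A \<in> Fset K \<Longrightarrow> A \<subseteq> {0<..<1}"
  by (erule Fset_elim) (auto simp: fixfree_def)

lemma nest:
  assumes NL: "no_linked_fixed_points K" and A: "A \<in> Fset K" and B: "B \<in> Fset K"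
    and AB: "A \<inter> B \<noteq> {}"
  shows "A \<subseteq> B \<or> B \<subseteq> A"
proof -
  obtain a b f where a: "A = {a<..<b}" "succ_pair K a b" using A by (rule Fset_elim)
  obtain c e f where c: "B = {c<..<e}" "succ_pair K c e" using B by (rule Fset_elim)
  have "(a = c \<and> b = e) \<or> b \<le> c \<or> e \<le> a \<or> (a < c \<and> e < b) \<or> (c < a \<and> b < e)"
    by (rule nolinkD[OF NL a(2) c(2)])
  moreover obtain x where "x \<in> A" "x \<in> B" using AB by blast
  then have x: "a < x" "x < b" "c < x" "x < e" using a(1) c(1) by auto
  ultimately show ?thesis
  proof (elim disjE)
    assume "a < c \<and> e < b" then have "B \<subseteq> A" unfolding a(1) c(1) by auto
    then show ?thesis by blast
  next
    assume "c < a \<and> b < e" then have "A \<subseteq> B" unfolding a(1) c(1) by auto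
    then show ?thesis by blast
  qed (use x a(1) c(1) in auto)
qed

lemma F2aux:
  assumes K: "homeo_group K" and NL: "no_linked_fixed_points K" and g: "g \<in> K"
    and s: "succ_pair K c d" and lt: "c < g c" "g d < d"
  shows False
proof -
  have gh: "homeo_plus g" using hg_hp[OF K g] .
  obtain f where f: "f \<in> K" "fixfree f c d" using s unfolding succ_iff by blast
  then have c0: "0 \<le> c" and cd: "c < d" and d1: "d \<le> 1" unfolding fixfree_def by auto
  have cont: "continuous_on {c..d} (\<lambda>y. g y - y)"
    using hp_cont[OF gh] c0 d1 by (intro continuous_intros) (auto intro: continuous_on_subset)
  have "\<exists>x. c \<le> x \<and> x \<le> d \<and> g x - x = 0"
    by (rule IVT2'[of "\<lambda>y. g y - y" d 0 c]) (use cont lt cd in auto)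
  then obtain z where z: "c \<le> z" "z \<le> d" "g z - z = 0" by blast
  have zc: "c < z" using z lt by (cases "z = c") auto
  have zd: "z < d" using z lt by (cases "z = d") auto
  obtain c1 d1' where cc: "c1 < c" "c < d1'" "fixfree g c1 d1'"
    using comp_around[OF gh, of c] c0 cd d1 lt by auto
  have "d1' \<le> z"
  proof (rule ccontr)
    assume "\<not> d1' \<le> z"
    then have "z \<in> {c1<..<d1'}" using cc zc by auto
    then show False using cc(3) z(3) unfolding fixfree_def by auto
  qed
  then have dd: "d1' < d" using zd by linarith
  have s1: "succ_pair K c1 d1'" unfolding succ_iff using cc(3) g by blast
  have "(c = c1 \<and> d = d1') \<or> d \<le> c1 \<or> d1' \<le> c \<or> (c < c1 \<and> d1' < d) \<or> (c1 < c \<and> d < d1')"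
    by (rule nolinkD[OF NL s s1])
  then show False using cc(1,2) dd cd by linarith
qed

lemma F2:
  assumes K: "homeo_group K" and NL: "no_linked_fixed_points K" and g: "g \<in> K"
    and A: "A \<in> Fset K"
  shows "g ` A = A \<or> g ` A \<inter> A = {}"
proof -
  have gh: "homeo_plus g" using hg_hp[OF K g] .
  obtain c d f where a: "A = {c<..<d}" "succ_pair K c d" using A by (rule Fset_elim)
  have cd: "c < d" using a(2) unfolding succ_pair_def by auto
  have ga: "g ` A = {g c<..<g d}" using a(1) hp_image_oo[OF gh] by simp
  have s2: "succ_pair K (g c) (g d)" using succ_conj[OF K g a(2)] .
  have "(c = g c \<and> d = g d) \<or> d \<le> g c \<or> g d \<le> c \<or> (c < g c \<and> g d < d) \<or> (g c < c \<and> d < g d)"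
    by (rule nolinkD[OF NL a(2) s2])
  moreover have "\<not> (c < g c \<and> g d < d)" using F2aux[OF K NL g a(2)] by blast
  moreover have "\<not> (g c < c \<and> d < g d)"
  proof
    assume h: "g c < c \<and> d < g d"
    have "c < inv g c" using h hp_less_iff[OF hp_inv[OF gh], of "g c" c] hp_inv1[OF gh] by simp
    moreover have "inv g d < d" using h hp_less_iff[OF hp_inv[OF gh], of d "g d"] hp_inv1[OF gh] by simp
    ultimately show False using F2aux[OF K NL hg_inv[OF K g] a(2)] by blast
  qed
  ultimately consider "c = g c \<and> d = g d" | "d \<le> g c" | "g d \<le> c" by blast
  then show ?thesis
  proof cases
    case 1 then show ?thesis using ga a(1) by simp
  next
    case 2 then have "g ` A \<inter> A = {}" using ga a(1) by auto
    then show ?thesis by blast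
  next
    case 3 then have "g ` A \<inter> A = {}" using ga a(1) by auto
    then show ?thesis by blast
  qed
qed


section \<open>Patches\<close>

definition patchfam :: "(real \<Rightarrow> real) set \<Rightarrow> real set \<Rightarrow> (real \<Rightarrow> real) \<Rightarrow> real set set \<Rightarrow> bool" where
  "patchfam K J k F \<longleftrightarrow> F \<subseteq> Fset K \<and> (\<forall>A\<in>F. A \<subseteq> J) \<and> (\<forall>A\<in>F. \<forall>B\<in>F. A \<inter> B \<noteq> {} \<longrightarrow> A = B)
     \<and> (\<forall>y\<in>J. y \<notin> \<Union>F \<longrightarrow> k y = y) \<and> (\<forall>A\<in>F. \<exists>u\<in>K. u ` A = A \<and> (\<forall>y\<in>A. k y = u y))"

definition patch :: "(real \<Rightarrow> real) set \<Rightarrow> real set \<Rightarrow> (real \<Rightarrow> real) \<Rightarrow> bool" where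
  "patch K J k \<longleftrightarrow> (\<exists>F. patchfam K J k F)"

lemma pf_all:
  assumes P: "patchfam K J k F"
  shows pf_Fset: "F \<subseteq> Fset K" and pf_subA: "\<forall>A\<in>F. A \<subseteq> J"
    and pf_disjA: "\<forall>A\<in>F. \<forall>B\<in>F. A \<inter> B \<noteq> {} \<longrightarrow> A = B"
    and pf_fixA: "\<forall>y\<in>J. y \<notin> \<Union>F \<longrightarrow> k y = y"
    and pf_uA: "\<forall>A\<in>F. \<exists>u\<in>K. u ` A = A \<and> (\<forall>y\<in>A. k y = u y)"
proof -
  note P' = P[unfolded patchfam_def]
  show "F \<subseteq> Fset K" using P' by (rule conjunct1)
  show "\<forall>A\<in>F. A \<subseteq> J" using P'[THEN conjunct2] by (rule conjunct1)
  show "\<forall>A\<in>F. \<forall>B\<in>F. A \<inter> B \<noteq> {} \<longrightarrow> A = B" using P'[THEN conjunct2, THEN conjunct2] by (rule conjunct1)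
  show "\<forall>y\<in>J. y \<notin> \<Union>F \<longrightarrow> k y = y" using P'[THEN conjunct2, THEN conjunct2, THEN conjunct2] by (rule conjunct1)
  show "\<forall>A\<in>F. \<exists>u\<in>K. u ` A = A \<and> (\<forall>y\<in>A. k y = u y)" using P'[THEN conjunct2, THEN conjunct2, THEN conjunct2] by (rule conjunct2)
qed

lemma pf_sub: "patchfam K J k F \<Longrightarrow> A \<in> F \<Longrightarrow> A \<subseteq> J"
  using pf_subA by blast
lemma pf_disj: "patchfam K J k F \<Longrightarrow> A \<in> F \<Longrightarrow> B \<in> F \<Longrightarrow> A \<inter> B \<noteq> {} \<Longrightarrow> A = B"
  using pf_disjA by blast
lemma pf_fix: "patchfam K J k F \<Longrightarrow> y \<in> J \<Longrightarrow> y \<notin> \<Union>F \<Longrightarrow> k y = y"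
  using pf_fixA by blast
lemma pf_u: "patchfam K J k F \<Longrightarrow> A \<in> F \<Longrightarrow> \<exists>u\<in>K. u ` A = A \<and> (\<forall>y\<in>A. k y = u y)"
  using pf_uA by blast

lemma fixfree_unique:
  assumes "fixfree g c d" "fixfree g c' d'" "{c<..<d} \<inter> {c'<..<d'} \<noteq> {}"
  shows "c = c' \<and> d = d'"
proof -
  obtain x where "x \<in> {c<..<d} \<inter> {c'<..<d'}" using assms(3) by blast
  then have x: "c < x" "x < d" "c' < x" "x < d'" by auto
  have f1: "\<forall>y\<in>{c<..<d}. g y \<noteq> y" "g c = c" "g d = d" using assms(1) unfolding fixfree_def by auto
  have f2: "\<forall>y\<in>{c'<..<d'}. g y \<noteq> y" "g c' = c'" "g d' = d'" using assms(2) unfolding fixfree_def by auto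
  have "\<not> c < c'" using f1(1) f2(2) x by force
  moreover have "\<not> c' < c" using f2(1) f1(2) x by force
  moreover have "\<not> d < d'" using f2(1) f1(3) x by force
  moreover have "\<not> d' < d" using f1(1) f2(3) x by force
  ultimately show ?thesis by linarith
qed

lemma induced_const:
  assumes g: "homeo_plus g" and h: "induced_by h g" and F: "fixfree g c d"
  shows "(\<forall>y\<in>{c<..<d}. h y = g y) \<or> (\<forall>y\<in>{c<..<d}. h y = y)"
proof (rule ccontr)
  assume "\<not> ?thesis"
  then obtain y1 y2 where y1: "y1 \<in> {c<..<d}" "h y1 \<noteq> g y1" and y2: "y2 \<in> {c<..<d}" "h y2 \<noteq> y2" by blast
  have hh: "homeo_plus h" using h induced_hp by blast
  from F have c0: "0 \<le> c" and d1: "d \<le> 1" and ff: "\<forall>y\<in>{c<..<d}. g y \<noteq> y" unfolding fixfree_def by auto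
  have ind: "\<And>y. y \<in> {c<..<d} \<Longrightarrow> h y = y \<or> h y = g y" using h c0 d1 unfolding induced_by_def by auto
  have hy1: "h y1 = y1" using ind[OF y1(1)] y1(2) by auto
  have hy2: "h y2 = g y2" using ind[OF y2(1)] y2(2) by auto
  define \<psi> where "\<psi> y = (h y - y) / (g y - y)" for y
  have p1: "\<psi> y1 = 0" unfolding \<psi>_def using hy1 by simp
  have p2: "\<psi> y2 = 1" unfolding \<psi>_def using hy2 ff y2(1) by simp
  have cont: "continuous_on {min y1 y2..max y1 y2} \<psi>"
  proof -
    have sub: "{min y1 y2..max y1 y2} \<subseteq> {0..1}" using y1(1) y2(1) c0 d1 by auto
    have sub2: "{min y1 y2..max y1 y2} \<subseteq> {c<..<d}" using y1(1) y2(1) by auto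
    have "continuous_on {min y1 y2..max y1 y2} h" "continuous_on {min y1 y2..max y1 y2} g"
      using continuous_on_subset[OF hp_cont[OF hh] sub] continuous_on_subset[OF hp_cont[OF g] sub] by auto
    then show ?thesis unfolding \<psi>_def using ff sub2
      by (intro continuous_intros) auto
  qed
  have "\<exists>z. min y1 y2 \<le> z \<and> z \<le> max y1 y2 \<and> \<psi> z = 1/2"
  proof (cases "y1 \<le> y2")
    case True
    then show ?thesis using IVT'[of \<psi> y1 "1/2" y2] p1 p2 cont by auto
  next
    case False
    then show ?thesis using IVT2'[of \<psi> y1 "1/2" y2] p1 p2 cont by auto
  qed
  then obtain z where z: "min y1 y2 \<le> z" "z \<le> max y1 y2" "\<psi> z = 1/2" by blast
  have zin: "z \<in> {c<..<d}" using z y1(1) y2(1) by auto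
  have "\<psi> z = 0 \<or> \<psi> z = 1" unfolding \<psi>_def using ind[OF zin] ff zin by auto
  then show False using z(3) by simp
qed

lemma induced_patch:
  assumes K: "homeo_group K" and g: "g \<in> K" and h: "induced_by h g"
  shows "patch K {0<..<1} h"
proof -
  have gh: "homeo_plus g" using hg_hp[OF K g] .
  define F where "F = {{c<..<d} | c d. fixfree g c d \<and> (\<forall>y\<in>{c<..<d}. h y = g y)}"
  have "patchfam K {0<..<1} h F" unfolding patchfam_def
  proof (intro conjI ballI impI)
    show "F \<subseteq> Fset K" unfolding F_def Fset_def succ_iff using g by blast
  next
    fix A assume "A \<in> F" then show "A \<subseteq> {0<..<1}" unfolding F_def fixfree_def by auto
  next
    fix A B assume "A \<in> F" "B \<in> F" "A \<inter> B \<noteq> {}"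
    then show "A = B" unfolding F_def using fixfree_unique by blast
  next
    fix y :: real assume y: "y \<in> {0<..<1}" "y \<notin> \<Union>F"
    show "h y = y"
    proof (cases "g y = y")
      case True then show ?thesis using h y unfolding induced_by_def by auto
    next
      case False
      then obtain c d where cd: "c < y" "y < d" "fixfree g c d" using comp_around[OF gh, of y] y by auto
      show ?thesis
      proof (cases "\<forall>y\<in>{c<..<d}. h y = g y")
        case True then have "{c<..<d} \<in> F" using cd unfolding F_def by blast
        then show ?thesis using y cd by auto
      next
        case False then show ?thesis using induced_const[OF gh h cd(3)] cd by auto
      qed
    qed
  next
    fix A assume "A \<in> F"
    then obtain c d where A: "A = {c<..<d}" "fixfree g c d" "\<forall>y\<in>{c<..<d}. h y = g y" unfolding F_def by blast
    have "g ` A = A" using A hp_image_oo[OF gh] unfolding fixfree_def by simp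
    then show "\<exists>u\<in>K. u ` A = A \<and> (\<forall>y\<in>A. h y = u y)" using A g by blast
  qed
  then show ?thesis unfolding patch_def by blast
qed

lemma cmp_fix: "(\<forall>k\<in>set ks. k y = y) \<Longrightarrow> cmp ks y = y"
  by (induction ks) auto

lemma cmp_image: "(\<forall>k\<in>set ks. k ` M = M) \<Longrightarrow> cmp ks ` M = M"
proof (induction ks)
  case (Cons k ks)
  then have "(k \<circ> cmp ks) ` M = M" by (simp only: image_comp[symmetric]) simp
  then show ?case by simp
qed simp

lemma cmp_conj:
  assumes u: "homeo_plus u"
  shows "cmp (map (\<lambda>k. inv u \<circ> k \<circ> u) ks) = inv u \<circ> cmp ks \<circ> u"
proof (induction ks)
  case Nil then show ?case using hp_inv1[OF u] by (auto simp: fun_eq_iff)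
next
  case (Cons k ks) then show ?case using hp_inv2[OF u] by (auto simp: fun_eq_iff)
qed

lemma sub_of_max:
  assumes NL: "no_linked_fixed_points K" and M: "M \<in> Fset K" and F: "F \<subseteq> Fset K"
    and mx: "\<forall>B\<in>F. M \<subseteq> B \<longrightarrow> M = B" and B: "B \<in> F" and BM: "B \<inter> M \<noteq> {}"
  shows "B \<subseteq> M"
  using nest[OF NL _ M BM] B F mx by blast

lemma patch_max_image:
  assumes NL: "no_linked_fixed_points K" and P: "patchfam K J k F" and M: "M \<in> Fset K" and MJ: "M \<subseteq> J"
    and mx: "\<forall>B\<in>F. M \<subseteq> B \<longrightarrow> M = B"
  shows "k ` M = M"
proof -
  from P have F: "F \<subseteq> Fset K" and fx: "\<forall>y\<in>J. y \<notin> \<Union>F \<longrightarrow> k y = y"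
    and pu: "\<forall>A\<in>F. \<exists>u\<in>K. u ` A = A \<and> (\<forall>y\<in>A. k y = u y)" unfolding patchfam_def by auto
  show ?thesis
  proof
    show "k ` M \<subseteq> M"
    proof
      fix z assume "z \<in> k ` M"
      then obtain y where y: "y \<in> M" "z = k y" by blast
      show "z \<in> M"
      proof (cases "y \<in> \<Union>F")
        case False then show ?thesis using fx y MJ by auto
      next
        case True
        then obtain B where B: "B \<in> F" "y \<in> B" by blast
        have BM: "B \<subseteq> M" using sub_of_max[OF NL M F mx B(1)] B y by blast
        obtain u where u: "u \<in> K" "u ` B = B" "\<forall>y\<in>B. k y = u y" using pu B by blast
        have "k y \<in> B" using u B by blast
        then show ?thesis using y BM by auto
      qed
    qed
  next
    show "M \<subseteq> k ` M"
    proof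
      fix z assume z: "z \<in> M"
      show "z \<in> k ` M"
      proof (cases "z \<in> \<Union>F")
        case False then have "k z = z" using fx z MJ by auto
        then show ?thesis using z by (metis imageI)
      next
        case True
        then obtain B where B: "B \<in> F" "z \<in> B" by blast
        have BM: "B \<subseteq> M" using sub_of_max[OF NL M F mx B(1)] B z by blast
        obtain u where u: "u \<in> K" "u ` B = B" "\<forall>y\<in>B. k y = u y" using pu B by blast
        obtain y where "y \<in> B" "z = u y" using u(2) B(2) by blast
        then have "z = k y" "y \<in> M" using u BM by auto
        then show ?thesis by blast
      qed
    qed
  qed
qed

lemma patch_restrict:
  assumes NL: "no_linked_fixed_points K" and P: "patchfam K J k F" and M: "M \<in> Fset K" and MJ: "M \<subseteq> J"
    and mx: "\<forall>B\<in>F. M \<subseteq> B \<longrightarrow> M = B"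
  shows "patchfam K M k {B\<in>F. B \<subseteq> M}"
proof -
  from P have F: "F \<subseteq> Fset K" and fx: "\<forall>y\<in>J. y \<notin> \<Union>F \<longrightarrow> k y = y"
    and dj: "\<forall>A\<in>F. \<forall>B\<in>F. A \<inter> B \<noteq> {} \<longrightarrow> A = B"
    and pu: "\<forall>A\<in>F. \<exists>u\<in>K. u ` A = A \<and> (\<forall>y\<in>A. k y = u y)" unfolding patchfam_def by auto
  show ?thesis unfolding patchfam_def
  proof (intro conjI ballI impI)
    show "{B \<in> F. B \<subseteq> M} \<subseteq> Fset K" using F by auto
  next
    fix y assume y: "y \<in> M" "y \<notin> \<Union>{B \<in> F. B \<subseteq> M}"
    have "y \<notin> \<Union>F"
    proof
      assume "y \<in> \<Union>F"
      then obtain B where B: "B \<in> F" "y \<in> B" by blast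
      have "B \<subseteq> M" using sub_of_max[OF NL M F mx B(1)] B y by blast
      then show False using y B by blast
    qed
    then show "k y = y" using fx y MJ by auto
  qed (use dj pu in auto)
qed

lemma patch_conj:
  assumes K: "homeo_group K" and P: "patchfam K M k F" and u: "u \<in> K" and uM: "u ` M = M"
  shows "patchfam K M (inv u \<circ> k \<circ> u) ((\<lambda>B. inv u ` B) ` F)"
proof -
  have uh: "homeo_plus u" using hg_hp[OF K u] .
  have iu: "inv u \<in> K" using hg_inv[OF K u] .
  from P have F: "F \<subseteq> Fset K" and FM: "\<forall>A\<in>F. A \<subseteq> M" and fx: "\<forall>y\<in>M. y \<notin> \<Union>F \<longrightarrow> k y = y"
    and dj: "\<forall>A\<in>F. \<forall>B\<in>F. A \<inter> B \<noteq> {} \<longrightarrow> A = B"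
    and pu: "\<forall>A\<in>F. \<exists>v\<in>K. v ` A = A \<and> (\<forall>y\<in>A. k y = v y)" unfolding patchfam_def by auto
  have "inv u ` M = inv u ` (u ` M)" using uM by simp
  also have "\<dots> = M" by (simp add: image_image hp_inv1[OF uh])
  finally have iuM: "inv u ` M = M" .
  show ?thesis unfolding patchfam_def
  proof (intro conjI ballI impI)
    show "(\<lambda>B. inv u ` B) ` F \<subseteq> Fset K" using F Fset_inv[OF K iu] by blast
  next
    fix A assume "A \<in> (\<lambda>B. inv u ` B) ` F"
    then obtain B where "B \<in> F" "A = inv u ` B" by blast
    then have "A \<subseteq> inv u ` M" using FM by blast
    then show "A \<subseteq> M" using iuM by simp
  next
    fix A B assume A: "A \<in> (\<lambda>B. inv u ` B) ` F" and B: "B \<in> (\<lambda>B. inv u ` B) ` F" and AB: "A \<inter> B \<noteq> {}"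
    obtain A' B' where "A' \<in> F" "B' \<in> F" "A = inv u ` A'" "B = inv u ` B'" using A B by blast
    moreover obtain z where "z \<in> A" "z \<in> B" using AB by blast
    ultimately have "z \<in> inv u ` A'" "z \<in> inv u ` B'" by auto
    then obtain a' b' where ab: "a' \<in> A'" "b' \<in> B'" "inv u a' = inv u b'" by (metis imageE)
    then have "a' = b'" using hp_eq_iff[OF hp_inv[OF uh]] by blast
    then have "A' = B'" using ab dj \<open>A' \<in> F\<close> \<open>B' \<in> F\<close> by blast
    then show "A = B" using \<open>A = inv u ` A'\<close> \<open>B = inv u ` B'\<close> by simp
  next
    fix y assume y: "y \<in> M" "y \<notin> \<Union>((\<lambda>B. inv u ` B) ` F)"
    have uyM: "u y \<in> M" using y uM by blast
    have "u y \<notin> \<Union>F"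
    proof
      assume "u y \<in> \<Union>F"
      then obtain B where "B \<in> F" "u y \<in> B" by blast
      then have "inv u (u y) \<in> inv u ` B" by blast
      then have "y \<in> inv u ` B" using hp_inv1[OF uh] by simp
      then show False using y \<open>B \<in> F\<close> by blast
    qed
    then have "k (u y) = u y" using fx uyM by blast
    then show "(inv u \<circ> k \<circ> u) y = y" using hp_inv1[OF uh] by simp
  next
    fix A assume "A \<in> (\<lambda>B. inv u ` B) ` F"
    then obtain B where B: "B \<in> F" "A = inv u ` B" by blast
    obtain v where v: "v \<in> K" "v ` B = B" "\<forall>y\<in>B. k y = v y" using pu B by blast
    have w: "inv u \<circ> v \<circ> u \<in> K" using hg_comp[OF K hg_comp[OF K iu v(1)] u] .
    have e1: "(inv u \<circ> v \<circ> u) ` A = inv u ` (v ` (u ` A))" by (simp add: image_image comp_def)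
    have e2: "u ` A = B" unfolding B(2) by (simp add: image_image hp_inv2[OF uh])
    have "(inv u \<circ> v \<circ> u) ` A = inv u ` (v ` B)" using e1 e2 by simp
    then have "(inv u \<circ> v \<circ> u) ` A = A" by (simp only: v(2) B(2)[symmetric])
    moreover have "\<forall>y\<in>A. (inv u \<circ> k \<circ> u) y = (inv u \<circ> v \<circ> u) y"
    proof
      fix y assume "y \<in> A"
      then have "u y \<in> B" using B(2) hp_inv2[OF uh] by auto
      then show "(inv u \<circ> k \<circ> u) y = (inv u \<circ> v \<circ> u) y" using v(3) by simp
    qed
    ultimately show "\<exists>v\<in>K. v ` A = A \<and> (\<forall>y\<in>A. (inv u \<circ> k \<circ> u) y = v y)" using w by blast
  qed
qed


section \<open>The descent lemma\<close>

lemma subsing_finite: "(\<And>A B. A \<in> S \<Longrightarrow> B \<in> S \<Longrightarrow> A = B) \<Longrightarrow> finite S"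
proof (cases "S = {}")
  case False
  assume h: "\<And>A B. A \<in> S \<Longrightarrow> B \<in> S \<Longrightarrow> A = B"
  obtain A where "A \<in> S" using False by blast
  then have "S \<subseteq> {A}" using h by blast
  then show ?thesis using finite_subset by blast
qed simp

lemma descent:
  assumes K: "homeo_group K" and NL: "no_linked_fixed_points K"
    and Xne: "X \<noteq> {}" and wX: "w ` X = X"
  shows "length ks = m \<Longrightarrow> a < b \<Longrightarrow> g \<in> K \<Longrightarrow> g ` {a<..<b} = {a<..<b}
    \<Longrightarrow> (\<forall>k\<in>set ks. patch K {a<..<b} k) \<Longrightarrow> (\<forall>y\<in>{a<..<b}. w y = g (cmp ks y))
    \<Longrightarrow> X \<subseteq> {a<..<b}
    \<Longrightarrow> \<exists>a' b' g' M. a' < b' \<and> X \<subseteq> {a'<..<b'} \<and> g' \<in> K \<and> g' ` {a'<..<b'} = {a'<..<b'}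
         \<and> M \<subseteq> Fset K \<and> (\<forall>y\<in>{a'<..<b'}. y \<notin> \<Union>M \<longrightarrow> w y = g' y)
         \<and> (\<forall>A\<in>M. \<not> X \<subseteq> A \<and> w ` A = g' ` A) \<and> (\<forall>A\<in>M. \<forall>B\<in>M. A \<subseteq> B \<longrightarrow> A = B)"
proof (induction m arbitrary: a b g ks rule: less_induct)
  case (less m)
  let ?J = "{a<..<b}"
  define fam where "fam k = (SOME F. patchfam K ?J k F)" for k
  have famp: "\<forall>k\<in>set ks. patchfam K ?J k (fam k)"
  proof
    fix k assume "k \<in> set ks"
    then have "\<exists>F. patchfam K ?J k F" using less.prems(5) unfolding patch_def by blast
    then show "patchfam K ?J k (fam k)" unfolding fam_def by (rule someI_ex)
  qed
  define L where "L = \<Union>(fam ` set ks)"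
  have LF: "L \<subseteq> Fset K" using famp pf_Fset unfolding L_def by blast
  have LJ: "\<forall>A\<in>L. A \<subseteq> ?J" using famp pf_sub unfolding L_def by blast
  have famL: "\<And>k. k \<in> set ks \<Longrightarrow> fam k \<subseteq> L" unfolding L_def by blast
  have fin: "finite {A\<in>L. Y \<subseteq> A}" if Y: "Y \<noteq> {}" for Y :: "real set"
  proof -
    have "{A\<in>L. Y \<subseteq> A} = (\<Union>k\<in>set ks. {A \<in> fam k. Y \<subseteq> A})" unfolding L_def by blast
    moreover have "finite {A \<in> fam k. Y \<subseteq> A}" if k: "k \<in> set ks" for k
    proof (rule subsing_finite)
      fix A B assume "A \<in> {A \<in> fam k. Y \<subseteq> A}" "B \<in> {A \<in> fam k. Y \<subseteq> A}"
      then have "A \<in> fam k" "B \<in> fam k" "A \<inter> B \<noteq> {}" using Y by auto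
      then show "A = B" using famp k pf_disj by blast
    qed
    ultimately show ?thesis by simp
  qed
  have maxex: "\<exists>M\<in>L. A \<subseteq> M \<and> (\<forall>B\<in>L. M \<subseteq> B \<longrightarrow> M = B)" if A: "A \<in> L" for A
  proof -
    have "A \<noteq> {}" using A LF Fset_ne by blast
    then have fS: "finite {B\<in>L. A \<subseteq> B}" by (rule fin)
    have aS: "A \<in> {B\<in>L. A \<subseteq> B}" using A by blast
    obtain m where m1: "m \<in> {B\<in>L. A \<subseteq> B}" and m2: "A \<subseteq> m" and m3: "\<forall>b\<in>{B\<in>L. A \<subseteq> B}. m \<subseteq> b \<longrightarrow> m = b"
      using finite_has_maximal2[OF fS aS] by blast
    have "\<forall>B\<in>L. m \<subseteq> B \<longrightarrow> m = B"
    proof (intro ballI impI)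
      fix B assume "B \<in> L" "m \<subseteq> B"
      then have "B \<in> {B\<in>L. A \<subseteq> B}" using m2 by blast
      then show "m = B" using m3 \<open>m \<subseteq> B\<close> by blast
    qed
    then show ?thesis using m1 m2 by blast
  qed
  have kimg: "k ` M = M" if M: "M \<in> L" "\<forall>B\<in>L. M \<subseteq> B \<longrightarrow> M = B" and k: "k \<in> set ks" for M k
  proof (rule patch_max_image[OF NL])
    show "patchfam K ?J k (fam k)" using famp k by blast
    show "M \<in> Fset K" using M LF by blast
    show "M \<subseteq> ?J" using M LJ by blast
    show "\<forall>B\<in>fam k. M \<subseteq> B \<longrightarrow> M = B" using M famL[OF k] by blast
  qed
  have wimg: "w ` M = g ` M" if M: "M \<in> L" "\<forall>k\<in>set ks. k ` M = M" for M
  proof -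
    have MJ: "M \<subseteq> ?J" using M(1) LJ by blast
    have "w ` M = (g \<circ> cmp ks) ` M" using MJ less.prems(6) by (intro image_cong) auto
    also have "\<dots> = g ` (cmp ks ` M)" by (simp add: image_comp)
    also have "cmp ks ` M = M" using M(2) by (rule cmp_image)
    finally show ?thesis .
  qed
  show ?case
  proof (cases "\<exists>A\<in>L. X \<subseteq> A")
    case True
    then have "{A\<in>L. X \<subseteq> A} \<noteq> {}" by blast
    then obtain G where G: "G \<in> {A\<in>L. X \<subseteq> A}" "\<forall>B\<in>{A\<in>L. X \<subseteq> A}. G \<subseteq> B \<longrightarrow> G = B"
      using finite_has_maximal[OF fin[OF Xne]] by blast
    have GL: "G \<in> L" and XG: "X \<subseteq> G" using G by auto
    have Gmax: "\<forall>B\<in>L. G \<subseteq> B \<longrightarrow> G = B" using G XG by blast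
    have GF: "G \<in> Fset K" using GL LF by blast
    have GJ: "G \<subseteq> ?J" using GL LJ by blast
    have kG: "\<forall>k\<in>set ks. k ` G = G" using kimg GL Gmax by blast
    have wG: "w ` G = g ` G" using wimg GL kG by blast
    have gG: "g ` G = G"
    proof -
      have "g ` G = G \<or> g ` G \<inter> G = {}" by (rule F2[OF K NL less.prems(3) GF])
      moreover have "X \<subseteq> g ` G" using wX XG wG by blast
      ultimately show ?thesis using XG Xne by blast
    qed
    obtain k0 where k0: "k0 \<in> set ks" "G \<in> fam k0" using GL unfolding L_def by blast
    obtain u where u: "u \<in> K" "u ` G = G" "\<forall>y\<in>G. k0 y = u y"
      using famp k0 pf_u by blast
    have uh: "homeo_plus u" using hg_hp[OF K u(1)] .
    obtain ks1 ks2 where ks: "ks = ks1 @ k0 # ks2" using split_list[OF k0(1)] by blast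
    define ks' where "ks' = map (\<lambda>k. inv u \<circ> k \<circ> u) ks1 @ ks2"
    have len: "length ks' < m" using less.prems(1) ks unfolding ks'_def by simp
    obtain c d f where cd: "G = {c<..<d}" "f \<in> K" "fixfree f c d" "succ_pair K c d"
      using GF by (rule Fset_elim)
    have cdl: "c < d" using cd(3) unfolding fixfree_def by simp
    have prk: "patchfam K G k {B\<in>fam k. B \<subseteq> G}" if k: "k \<in> set ks" for k
      by (rule patch_restrict[OF NL _ GF GJ]) (use famp k famL[OF k] Gmax in blast)+
    have pk: "\<forall>k\<in>set ks'. patch K G k"
    proof
      fix k' assume "k' \<in> set ks'"
      then consider "k' \<in> set ks2" | k where "k \<in> set ks1" "k' = inv u \<circ> k \<circ> u"
        unfolding ks'_def by auto
      then show "patch K G k'"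
      proof cases
        case 1 then show ?thesis using prk ks unfolding patch_def by auto
      next
        case 2
        have "patchfam K G k {B\<in>fam k. B \<subseteq> G}" using prk 2(1) ks by auto
        then show ?thesis unfolding patch_def 2(2) using patch_conj[OF K _ u(1) u(2)] by blast
      qed
    qed
    have eq: "\<forall>y\<in>G. w y = (g \<circ> u) (cmp ks' y)"
    proof
      fix y assume y: "y \<in> G"
      define z where "z = cmp ks2 y"
      have "cmp ks2 ` G = G" using kG ks by (intro cmp_image) auto
      then have zG: "z \<in> G" unfolding z_def using y by blast
      have "cmp ks' y = inv u (cmp ks1 (u z))"
        unfolding ks'_def cmp_append cmp_conj[OF uh] z_def by simp
      then have "(g \<circ> u) (cmp ks' y) = g (cmp ks1 (u z))" using hp_inv2[OF uh] by simp
      moreover have "w y = g (cmp ks1 (k0 z))" using less.prems(6) y GJ ks unfolding z_def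
        by (auto simp: cmp_append)
      ultimately show "w y = (g \<circ> u) (cmp ks' y)" using u(3) zG by simp
    qed
    have gu: "g \<circ> u \<in> K" using hg_comp[OF K less.prems(3) u(1)] .
    have guG: "(g \<circ> u) ` G = G" using gG u(2) by (metis image_comp)
    show ?thesis
      by (rule less.IH[OF len refl cdl gu]) (use guG pk eq XG cd(1) in auto)
  next
    case False
    define M where "M = {A\<in>L. \<forall>B\<in>L. A \<subseteq> B \<longrightarrow> A = B}"
    have "M \<subseteq> Fset K" using LF unfolding M_def by blast
    moreover have "\<forall>y\<in>?J. y \<notin> \<Union>M \<longrightarrow> w y = g y"
    proof (intro ballI impI)
      fix y assume y: "y \<in> ?J" "y \<notin> \<Union>M"
      have "y \<notin> \<Union>L"
      proof
        assume "y \<in> \<Union>L"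
        then obtain A where "A \<in> L" "y \<in> A" by blast
        then obtain N where "N \<in> L" "A \<subseteq> N" "\<forall>B\<in>L. N \<subseteq> B \<longrightarrow> N = B" using maxex by blast
        then show False using y \<open>y \<in> A\<close> unfolding M_def by blast
      qed
      then have "\<forall>k\<in>set ks. k y = y" using famp y famL pf_fix by blast
      then have "cmp ks y = y" by (rule cmp_fix)
      then show "w y = g y" using less.prems(6) y by simp
    qed
    moreover have "\<forall>A\<in>M. \<not> X \<subseteq> A \<and> w ` A = g ` A"
    proof
      fix A assume A: "A \<in> M"
      then have "A \<in> L" "\<forall>B\<in>L. A \<subseteq> B \<longrightarrow> A = B" unfolding M_def by auto
      then have "\<forall>k\<in>set ks. k ` A = A" using kimg by blast
      then have "w ` A = g ` A" using wimg \<open>A \<in> L\<close> by blast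
      then show "\<not> X \<subseteq> A \<and> w ` A = g ` A" using False \<open>A \<in> L\<close> by blast
    qed
    moreover have "\<forall>A\<in>M. \<forall>B\<in>M. A \<subseteq> B \<longrightarrow> A = B" unfolding M_def by blast
    ultimately show ?thesis using less.prems(2,3,4,7) by blast
  qed
qed


lemma oo_eq:
  fixes c e x y :: real
  assumes "c < e" "{x<..<y} = {c<..<e}" shows "x = c \<and> y = e"
proof -
  have "x < y" using assms by (metis greaterThanLessThan_empty_iff2 greaterThanLessThan_empty_iff not_less)
  then show ?thesis using assms greaterThanLessThan_subseteq_greaterThanLessThan
    by (metis order.antisym order_refl)
qed

lemma hp_oo_fix:
  assumes f: "homeo_plus f" and ab: "a < b" and img: "f ` {a<..<b} = {a<..<b}"
  shows "f a = a \<and> f b = b"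
  using oo_eq[OF ab] img hp_image_oo[OF f] by metis

lemma Ind_patch: "homeo_group K \<Longrightarrow> h \<in> Ind K \<Longrightarrow> patch K {0<..<1} h"
  unfolding Ind_def using induced_patch by blast

lemma succ_I_op:
  assumes K: "homeo_group K" and NL: "no_linked_fixed_points K" and s: "succ_pair (I_op K) p q"
  shows "succ_pair K p q"
proof -
  obtain w where w: "w \<in> I_op K" "fixfree w p q" using s unfolding succ_iff by blast
  have wh: "homeo_plus w" using hg_hp[OF I_op_hg w(1)] .
  from w(2) have p0: "0 \<le> p" and pq: "p < q" and q1: "q \<le> 1" and wp: "w p = p" and wq: "w q = q"
    and wf: "\<forall>y\<in>{p<..<q}. w y \<noteq> y" unfolding fixfree_def by auto
  obtain hs where hs: "set hs \<subseteq> Ind K" "w = cmp hs" using I_op_words[OF K w(1)] by blast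
  let ?X = "{p<..<q}"
  have Xne: "?X \<noteq> {}" using pq by simp
  have wX: "w ` ?X = ?X" using hp_image_oo[OF wh] wp wq by simp
  have "\<exists>a' b' g' M. a' < b' \<and> ?X \<subseteq> {a'<..<b'} \<and> g' \<in> K \<and> g' ` {a'<..<b'} = {a'<..<b'}
         \<and> M \<subseteq> Fset K \<and> (\<forall>y\<in>{a'<..<b'}. y \<notin> \<Union>M \<longrightarrow> w y = g' y)
         \<and> (\<forall>A\<in>M. \<not> ?X \<subseteq> A \<and> w ` A = g' ` A) \<and> (\<forall>A\<in>M. \<forall>B\<in>M. A \<subseteq> B \<longrightarrow> A = B)"
  proof (rule descent[OF K NL Xne wX refl])
    show "(0::real) < 1" by simp
    show "id \<in> K" using hg_id[OF K] .
    show "id ` {0::real<..<1} = {0<..<1}" by simp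
    show "\<forall>k\<in>set hs. patch K {0<..<1} k" using hs(1) Ind_patch[OF K] by blast
    show "\<forall>y\<in>{0<..<1}. w y = id (cmp hs y)" unfolding hs(2) by simp
    show "?X \<subseteq> {0<..<1}" using p0 q1 greaterThanLessThan_subseteq_greaterThanLessThan[of p q 0 1] by simp
  qed
  then obtain a' b' g' M where ab': "a' < b'" and XJ: "?X \<subseteq> {a'<..<b'}" and g': "g' \<in> K"
    and gJ: "g' ` {a'<..<b'} = {a'<..<b'}" and MF: "M \<subseteq> Fset K"
    and off: "\<forall>y\<in>{a'<..<b'}. y \<notin> \<Union>M \<longrightarrow> w y = g' y"
    and onM: "\<forall>A\<in>M. \<not> ?X \<subseteq> A \<and> w ` A = g' ` A" by (elim exE conjE) blast
  have gh: "homeo_plus g'" using hg_hp[OF K g'] .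
  have "a' \<le> p \<and> q \<le> b'" using XJ pq greaterThanLessThan_subseteq_greaterThanLessThan[of p q a' b'] by simp
  then have aq: "a' \<le> p" "q \<le> b'" by auto
  have gab: "g' a' = a'" "g' b' = b'" using hp_oo_fix[OF gh ab' gJ] by auto
  have Mdis: "\<forall>y\<in>A. g' y \<noteq> y \<and> w y \<noteq> y" if A: "A \<in> M" and AX: "A \<inter> ?X \<noteq> {}" for A
  proof -
    have AF: "A \<in> Fset K" using A MF by blast
    obtain c e f where ce: "A = {c<..<e}" "fixfree f c e" using AF by (rule Fset_elim)
    have cel: "c < e" using ce(2) unfolding fixfree_def by simp
    have nX: "\<not> ?X \<subseteq> A" and wA: "w ` A = g' ` A" using onM A by auto
    have "g' ` A \<noteq> A"
    proof
      assume gA: "g' ` A = A"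
      then have "w ` A = A" using wA by simp
      then have wce: "w c = c" "w e = e" using hp_oo_fix[OF wh cel] ce(1) by auto
      obtain x where "x \<in> A" "x \<in> ?X" using AX by blast
      then have x: "c < x" "x < e" "p < x" "x < q" using ce(1) by auto
      have "\<not> (p < c \<and> c < q)" using wf wce by auto
      moreover have "\<not> (p < e \<and> e < q)" using wf wce by auto
      ultimately have "c \<le> p" "q \<le> e" using x by linarith+
      then have "?X \<subseteq> A" using ce(1) by auto
      then show False using nX by blast
    qed
    then have disj: "g' ` A \<inter> A = {}" using F2[OF K NL g' AF] by blast
    show ?thesis
    proof
      fix y assume y: "y \<in> A"
      have "g' y \<in> g' ` A" "w y \<in> w ` A" using y by auto
      then show "g' y \<noteq> y \<and> w y \<noteq> y" using disj wA y by auto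
    qed
  qed
  have inner: "g' y \<noteq> y" if y: "y \<in> ?X" for y
  proof (cases "y \<in> \<Union>M")
    case True
    then obtain A where A: "A \<in> M" "y \<in> A" by blast
    then show ?thesis using Mdis[OF A(1)] y by blast
  next
    case False
    then have "w y = g' y" using off XJ y by blast
    then show ?thesis using wf y by auto
  qed
  have endp: "g' p = p"
  proof (cases "p \<in> {a'<..<b'}")
    case True
    have "p \<notin> \<Union>M"
    proof
      assume "p \<in> \<Union>M"
      then obtain A where A: "A \<in> M" "p \<in> A" by blast
      obtain c e f where ce: "A = {c<..<e}" "fixfree f c e" using A(1) MF by (meson Fset_elim subsetD)
      have "(p + min e q)/2 \<in> A \<inter> ?X" using A(2) ce(1) pq by auto
      then have "A \<inter> ?X \<noteq> {}" by blast
      then show False using Mdis[OF A(1)] A(2) wp by blast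
    qed
    then show ?thesis using off True wp by auto
  next
    case False
    then have "p = a'" using aq pq by auto
    then show ?thesis using gab by simp
  qed
  have endq: "g' q = q"
  proof (cases "q \<in> {a'<..<b'}")
    case True
    have "q \<notin> \<Union>M"
    proof
      assume "q \<in> \<Union>M"
      then obtain A where A: "A \<in> M" "q \<in> A" by blast
      obtain c e f where ce: "A = {c<..<e}" "fixfree f c e" using A(1) MF by (meson Fset_elim subsetD)
      have "(q + max c p)/2 \<in> A \<inter> ?X" using A(2) ce(1) pq by auto
      then have "A \<inter> ?X \<noteq> {}" by blast
      then show False using Mdis[OF A(1)] A(2) wq by blast
    qed
    then show ?thesis using off True wq by auto
  next
    case False
    then have "q = b'" using aq pq by auto
    then show ?thesis using gab by simp
  qed
  have "fixfree g' p q" unfolding fixfree_def using p0 pq q1 endp endq inner by auto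
  then show ?thesis unfolding succ_iff using g' by blast
qed


section \<open>Translation numbers\<close>

lemma transl_step:
  assumes K: "homeo_group K" and NL: "no_linked_fixed_points K" and H: "homeo_group H"
    and KH: "K \<subseteq> H" and IH: "I_op K \<subseteq> H" and tau: "rel_transl_number H a b \<tau>"
    and s: "succ_pair K a b" and w: "w \<in> stab (I_op K) a b"
  shows "\<exists>g\<in>stab K a b. \<tau> w = \<tau> g"
proof -
  have wI: "w \<in> I_op K" and wab: "w ` {a..b} = {a..b}" using w unfolding stab_def by auto
  have wh: "homeo_plus w" using hg_hp[OF I_op_hg wI] .
  obtain f where f: "f \<in> K" "fixfree f a b" using s unfolding succ_iff by blast
  from f(2) have a0: "0 \<le> a" and ab: "a < b" and b1: "b \<le> 1" unfolding fixfree_def by auto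
  have "{w a..w b} = {a..b}" using wab hp_image_cc[OF wh] by simp
  then have wa: "w a = a" and wb: "w b = b" using ab by auto
  let ?X = "{a<..<b}"
  have XF: "?X \<in> Fset K" using s by (rule Fset_I)
  have Xne: "?X \<noteq> {}" using ab by simp
  have wX: "w ` ?X = ?X" using hp_image_oo[OF wh] wa wb by simp
  obtain hs where hs: "set hs \<subseteq> Ind K" "w = cmp hs" using I_op_words[OF K wI] by blast
  have "\<exists>a' b' g' M. a' < b' \<and> ?X \<subseteq> {a'<..<b'} \<and> g' \<in> K \<and> g' ` {a'<..<b'} = {a'<..<b'}
         \<and> M \<subseteq> Fset K \<and> (\<forall>y\<in>{a'<..<b'}. y \<notin> \<Union>M \<longrightarrow> w y = g' y)
         \<and> (\<forall>A\<in>M. \<not> ?X \<subseteq> A \<and> w ` A = g' ` A) \<and> (\<forall>A\<in>M. \<forall>B\<in>M. A \<subseteq> B \<longrightarrow> A = B)"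
  proof (rule descent[OF K NL Xne wX refl])
    show "(0::real) < 1" by simp
    show "id \<in> K" using hg_id[OF K] .
    show "id ` {0::real<..<1} = {0<..<1}" by simp
    show "\<forall>k\<in>set hs. patch K {0<..<1} k" using hs(1) Ind_patch[OF K] by blast
    show "\<forall>y\<in>{0<..<1}. w y = id (cmp hs y)" unfolding hs(2) by simp
    show "?X \<subseteq> {0<..<1}" using a0 b1 greaterThanLessThan_subseteq_greaterThanLessThan[of a b 0 1] by simp
  qed
  then obtain a' b' g' M where ab': "a' < b'" and XJ: "?X \<subseteq> {a'<..<b'}" and g': "g' \<in> K"
    and gJ: "g' ` {a'<..<b'} = {a'<..<b'}" and MF: "M \<subseteq> Fset K"
    and off: "\<forall>y\<in>{a'<..<b'}. y \<notin> \<Union>M \<longrightarrow> w y = g' y"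
    and onM: "\<forall>A\<in>M. \<not> ?X \<subseteq> A \<and> w ` A = g' ` A"
    and mx: "\<forall>A\<in>M. \<forall>B\<in>M. A \<subseteq> B \<longrightarrow> A = B" by (elim exE conjE) blast
  have gh: "homeo_plus g'" using hg_hp[OF K g'] .
  have "a' \<le> a \<and> b \<le> b'" using XJ ab greaterThanLessThan_subseteq_greaterThanLessThan[of a b a' b'] by simp
  then have aq: "a' \<le> a" "b \<le> b'" by auto
  have gab: "g' a' = a'" "g' b' = b'" using hp_oo_fix[OF gh ab' gJ] by auto
  have insideX: "A \<subseteq> ?X" if A: "A \<in> M" and AX: "A \<inter> ?X \<noteq> {}" for A
  proof -
    have "A \<subseteq> ?X \<or> ?X \<subseteq> A" using nest[OF NL _ XF AX] A MF by blast
    then show ?thesis using onM A by blast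
  qed
  have notinM: "y \<notin> \<Union>M" if y: "y \<in> {a, b}" for y
  proof
    assume "y \<in> \<Union>M"
    then obtain A where A: "A \<in> M" "y \<in> A" by blast
    obtain c e f where ce: "A = {c<..<e}" "fixfree f c e" using A(1) MF by (meson Fset_elim subsetD)
    have "(if y = a then (y + min e b)/2 else (y + max c a)/2) \<in> A \<inter> ?X" using A(2) ce(1) ab y by auto
    then have "A \<inter> ?X \<noteq> {}" by blast
    then have "A \<subseteq> ?X" using insideX A(1) by blast
    then show False using A(2) y by auto
  qed
  have ga: "g' a = a"
  proof (cases "a \<in> {a'<..<b'}")
    case True then show ?thesis using off notinM wa by auto
  next
    case False then have "a = a'" using aq ab by auto
    then show ?thesis using gab by simp
  qed
  have gb: "g' b = b"
  proof (cases "b \<in> {a'<..<b'}")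
    case True then show ?thesis using off notinM wb by auto
  next
    case False then have "b = b'" using aq ab by auto
    then show ?thesis using gab by simp
  qed
  have gstab: "g' ` {a..b} = {a..b}" using hp_image_cc[OF gh] ga gb by simp
  have gS: "g' \<in> stab K a b" unfolding stab_def using g' gstab by blast
  have "\<exists>y\<in>?X. y \<notin> \<Union>M"
  proof (cases "\<exists>A\<in>M. A \<inter> ?X \<noteq> {}")
    case False
    have "(a+b)/2 \<in> ?X" using ab by simp
    moreover then have "(a+b)/2 \<notin> \<Union>M" using False by blast
    ultimately show ?thesis by blast
  next
    case True
    then obtain A where A: "A \<in> M" "A \<inter> ?X \<noteq> {}" by blast
    have AX: "A \<subseteq> ?X" using insideX A by blast
    obtain c e f where ce: "A = {c<..<e}" "fixfree f c e" using A(1) MF by (meson Fset_elim subsetD)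
    have cel: "c < e" using ce(2) unfolding fixfree_def by simp
    have "a \<le> c \<and> e \<le> b" using AX ce(1) cel greaterThanLessThan_subseteq_greaterThanLessThan[of c e a b] by simp
    then have ce2: "a \<le> c" "e \<le> b" by auto
    have nX: "\<not> ?X \<subseteq> A" using onM A(1) by blast
    have pt: "y \<notin> \<Union>M" if y: "y \<in> ?X" "y \<notin> A" "y \<in> closure A" for y
    proof
      assume "y \<in> \<Union>M"
      then obtain A' where A': "A' \<in> M" "y \<in> A'" by blast
      obtain c' e' f' where ce': "A' = {c'<..<e'}" "fixfree f' c' e'" using A'(1) MF by (meson Fset_elim subsetD)
      have yy: "y = c \<or> y = e" using y(2,3) ce(1) cel by auto
      have "(if y = c then (y + min e e')/2 else (y + max c c')/2) \<in> A' \<inter> A"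
        using yy A'(2) ce'(1) ce(1) cel by auto
      then have "A' \<inter> A \<noteq> {}" by blast
      then have "A' \<subseteq> A \<or> A \<subseteq> A'" using nest[OF NL] A'(1) A(1) MF by blast
      moreover have "\<not> A' \<subseteq> A" using A'(2) y(2) by blast
      ultimately have "A \<subseteq> A'" by blast
      then have "A = A'" using mx A(1) A'(1) by blast
      then show False using A'(2) y(2) by blast
    qed
    show ?thesis
    proof (cases "a < c")
      case True
      have "c \<in> ?X" "c \<notin> A" "c \<in> closure A" using True cel ce2 ce(1) by auto
      then show ?thesis using pt by blast
    next
      case False
      then have "a = c" using ce2 by auto
      then have "e < b" using nX ce(1) ce2 by (metis order.not_eq_order_implies_strict order_refl)
      then have "e \<in> ?X" "e \<notin> A" "e \<in> closure A" using cel ce2 ce(1) by auto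
      then show ?thesis using pt by blast
    qed
  qed
  then obtain y where y: "y \<in> ?X" "y \<notin> \<Union>M" by blast
  have wyg: "w y = g' y" using off y XJ by blast
  define v where "v = inv g' \<circ> w"
  have vH: "v \<in> H" unfolding v_def using hg_comp[OF H hg_inv[OF H] ] KH g' IH wI by blast
  have "v ` {a..b} = {a..b}"
  proof -
    have "v ` {a..b} = inv g' ` (w ` {a..b})" unfolding v_def by (simp add: image_comp)
    also have "\<dots> = inv g' ` (g' ` {a..b})" using wab gstab by simp
    also have "\<dots> = {a..b}" by (simp add: image_image hp_inv1[OF gh])
    finally show ?thesis .
  qed
  then have vS: "v \<in> stab H a b" unfolding stab_def using vH by blast
  have gSH: "g' \<in> stab H a b" using gS KH unfolding stab_def by blast
  have vfix: "v y = y" unfolding v_def using wyg hp_inv1[OF gh] by simp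
  have tv: "\<tau> v = 0" using tau vS vfix y(1) unfolding rel_transl_number_def by blast
  have gv: "g' \<circ> v = w" unfolding v_def using hp_inv2[OF gh] by (auto simp: fun_eq_iff)
  have "\<tau> (g' \<circ> v) = \<tau> g' + \<tau> v" using tau gSH vS unfolding rel_transl_number_def by blast
  then have "\<tau> w = \<tau> g'" using gv tv by simp
  then show ?thesis using gS by blast
qed


lemma In_hg: "homeo_group G \<Longrightarrow> homeo_group ((I_op ^^ n) G)"
  by (induction n) (auto simp: I_op_hg)

lemma In_Suc: "(I_op ^^ Suc n) G = I_op ((I_op ^^ n) G)" by simp

lemma In_succ:
  assumes G: "homeo_group G" and NL: "no_linked_fixed_points G"
  shows "succ_pair ((I_op ^^ n) G) a b \<Longrightarrow> succ_pair G a b \<and> no_linked_fixed_points ((I_op ^^ n) G)"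
proof (induction n arbitrary: a b)
  case 0 then show ?case using NL by simp
next
  case (Suc n)
  let ?K = "(I_op ^^ n) G"
  have nl: "no_linked_fixed_points ?K"
  proof (cases "\<exists>a b. succ_pair ?K a b")
    case True then show ?thesis using Suc.IH by blast
  next
    case False then show ?thesis unfolding no_linked_fixed_points_def by blast
  qed
  have K: "homeo_group ?K" using In_hg[OF G] .
  have "succ_pair ?K a b" using succ_I_op[OF K nl] Suc.prems by simp
  then have "succ_pair G a b" using Suc.IH by blast
  moreover have "no_linked_fixed_points ((I_op ^^ Suc n) G)"
    unfolding no_linked_fixed_points_def
  proof (intro allI impI)
    fix a b c d assume "succ_pair ((I_op ^^ Suc n) G) a b" "succ_pair ((I_op ^^ Suc n) G) c d"
    then have "succ_pair ?K a b" "succ_pair ?K c d" using succ_I_op[OF K nl] by simp_all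
    then show "\<not> linked a b c d" using nl unfolding no_linked_fixed_points_def by blast
  qed
  ultimately show ?case by blast
qed

lemma In_NL:
  assumes G: "homeo_group G" and NL: "no_linked_fixed_points G"
  shows "no_linked_fixed_points ((I_op ^^ n) G)"
proof (cases "\<exists>a b. succ_pair ((I_op ^^ n) G) a b")
  case True then show ?thesis using In_succ[OF G NL] by blast
next
  case False then show ?thesis unfolding no_linked_fixed_points_def by blast
qed

lemma In_succG:
  assumes G: "homeo_group G" and NL: "no_linked_fixed_points G"
  shows "succ_pair ((I_op ^^ n) G) a b \<Longrightarrow> succ_pair G a b"
  using In_succ[OF G NL] by blast

lemma In_mono:
  assumes G: "homeo_group G" shows "m \<le> n \<Longrightarrow> (I_op ^^ m) G \<subseteq> (I_op ^^ n) G"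
proof (induction n)
  case 0 then show ?case by simp
next
  case (Suc n)
  show ?case
  proof (cases "m = Suc n")
    case False
    then have "(I_op ^^ m) G \<subseteq> (I_op ^^ n) G" using Suc by simp
    also have "\<dots> \<subseteq> (I_op ^^ Suc n) G" using I_op_incl[OF In_hg[OF G]] by simp
    finally show ?thesis .
  qed simp
qed

lemma I_infty_mem: "f \<in> I_infty G \<longleftrightarrow> (\<exists>n. f \<in> (I_op ^^ n) G)"
  unfolding I_infty_def by blast

lemma I_infty_hg:
  assumes G: "homeo_group G" shows "homeo_group (I_infty G)"
  unfolding homeo_group_def
proof (intro conjI ballI)
  fix g assume "g \<in> I_infty G"
  then obtain n where "g \<in> (I_op ^^ n) G" unfolding I_infty_mem by blast
  then show "homeo_plus g" using hg_hp[OF In_hg[OF G]] by blast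
next
  show "id \<in> I_infty G" unfolding I_infty_mem using hg_id[OF In_hg[OF G, of 0]] by blast
next
  fix f g assume "f \<in> I_infty G" "g \<in> I_infty G"
  then obtain m n where "f \<in> (I_op ^^ m) G" "g \<in> (I_op ^^ n) G" unfolding I_infty_mem by blast
  then have "f \<in> (I_op ^^ max m n) G" "g \<in> (I_op ^^ max m n) G"
    using In_mono[OF G, of m "max m n"] In_mono[OF G, of n "max m n"] by auto
  then show "f \<circ> g \<in> I_infty G" unfolding I_infty_mem using hg_comp[OF In_hg[OF G]] by blast
next
  fix g assume "g \<in> I_infty G"
  then obtain n where "g \<in> (I_op ^^ n) G" unfolding I_infty_mem by blast
  then show "inv g \<in> I_infty G" unfolding I_infty_mem using hg_inv[OF In_hg[OF G]] by blast
qed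

lemma words_orbit:
  assumes K: "homeo_group K" and hs: "set hs \<subseteq> Ind K"
  shows "\<exists>k\<in>K. cmp hs x = k x"
  using hs
proof (induction hs)
  case Nil then show ?case using hg_id[OF K] by (intro bexI[of _ id]) auto
next
  case (Cons h hs)
  then obtain k where k: "k \<in> K" "cmp hs x = k x" by auto
  obtain g where g: "g \<in> K" "induced_by h g" using Cons.prems unfolding Ind_def by auto
  have hh: "homeo_plus h" using induced_hp[OF g(2)] .
  have kh: "homeo_plus k" using hg_hp[OF K k(1)] .
  have disj: "h (k x) = k x \<or> h (k x) = g (k x)"
  proof (cases "k x \<in> {0..1}")
    case True then show ?thesis using g(2) unfolding induced_by_def by blast
  next
    case False then show ?thesis using hp_out[OF hh] by blast
  qed
  have gk: "g \<circ> k \<in> K" using hg_comp[OF K g(1) k(1)] .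
  from disj show ?case
  proof
    assume "h (k x) = k x" then show ?case using k by auto
  next
    assume "h (k x) = g (k x)" then have "cmp (h # hs) x = (g \<circ> k) x" using k by simp
    then show ?case using gk by blast
  qed
qed

lemma In_orbit:
  assumes G: "homeo_group G"
  shows "w \<in> (I_op ^^ n) G \<Longrightarrow> \<exists>g\<in>G. w x = g x"
proof (induction n arbitrary: w x)
  case 0 then show ?case by auto
next
  case (Suc n)
  obtain hs where hs: "set hs \<subseteq> Ind ((I_op ^^ n) G)" "w = cmp hs"
    using I_op_words[OF In_hg[OF G]] Suc.prems by auto
  obtain k where "k \<in> (I_op ^^ n) G" "w x = k x" using words_orbit[OF In_hg[OF G] hs(1)] hs(2) by auto
  then show ?case using Suc.IH by metis
qed

lemma stab_mono: "K \<subseteq> H \<Longrightarrow> stab K a b \<subseteq> stab H a b"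
  unfolding stab_def by blast

lemma In_transl:
  assumes G: "homeo_group G" and NL: "no_linked_fixed_points G"
    and s: "succ_pair G a b" and tau: "rel_transl_number (I_infty G) a b \<tau>"
  shows "\<tau> ` stab ((I_op ^^ n) G) a b \<subseteq> \<tau> ` stab G a b"
proof (induction n)
  case 0 then show ?case by simp
next
  case (Suc n)
  let ?K = "(I_op ^^ n) G"
  have K: "homeo_group ?K" using In_hg[OF G] .
  have nl: "no_linked_fixed_points ?K" using In_NL[OF G NL] .
  have KH: "?K \<subseteq> I_infty G" unfolding I_infty_def by blast
  have IH: "I_op ?K \<subseteq> I_infty G" unfolding I_infty_def using In_Suc[of n G] by blast
  have sK: "succ_pair ?K a b" using succ_mono[OF In_mono[OF G, of 0 n]] s by simp
  show ?case
  proof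
    fix t assume "t \<in> \<tau> ` stab ((I_op ^^ Suc n) G) a b"
    then obtain w where w: "w \<in> stab (I_op ?K) a b" "t = \<tau> w" by auto
    obtain g where "g \<in> stab ?K a b" "\<tau> w = \<tau> g"
      using transl_step[OF K nl I_infty_hg[OF G] KH IH tau sK w(1)] by blast
    then show "t \<in> \<tau> ` stab G a b" using Suc.IH w(2) by blast
  qed
qed

lemma In_sub_complete:
  assumes H: "complete_group H" and GH: "G \<subseteq> H"
  shows "(I_op ^^ n) G \<subseteq> H"
proof (induction n)
  case 0 then show ?case using GH by simp
next
  case (Suc n)
  have hg: "homeo_group H" using H unfolding complete_group_def by blast
  have "Ind ((I_op ^^ n) G) \<subseteq> H" using H Suc unfolding Ind_def complete_group_def by blast
  then have "I_op ((I_op ^^ n) G) \<subseteq> H" unfolding I_op_alt[of "(I_op ^^ n) G"] by (rule gen_group_sub[OF hg])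
  then show ?case by simp
qed

theorem lemmal:
  assumes "homeo_group G" and "no_linked_fixed_points G"
  shows "complete_group (I_infty G)
    \<and> (\<forall>x\<in>{0..1}. {g x | g. g \<in> I_infty G} = {g x | g. g \<in> G})
    \<and> (\<forall>a b. succ_pair (I_infty G) a b \<longrightarrow> succ_pair G a b)
    \<and> (\<forall>a b \<tau>. succ_pair G a b \<longrightarrow> rel_transl_number (I_infty G) a b \<tau> \<longrightarrow>
          \<tau> ` stab G a b = \<tau> ` stab (I_infty G) a b)
    \<and> (\<forall>H. complete_group H \<longrightarrow> G \<subseteq> H \<longrightarrow> I_infty G \<subseteq> H)"
proof (intro conjI)
  note G = assms(1) and NL = assms(2)
  have GI: "G \<subseteq> I_infty G" unfolding I_infty_def using funpow_0[of I_op G] by blast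
  have sp: "\<forall>a b. succ_pair (I_infty G) a b \<longrightarrow> succ_pair G a b"
  proof (intro allI impI)
    fix a b assume "succ_pair (I_infty G) a b"
    then obtain f where f: "f \<in> I_infty G" "fixfree f a b" unfolding succ_iff by blast
    then obtain n where "f \<in> (I_op ^^ n) G" unfolding I_infty_mem by blast
    then have "succ_pair ((I_op ^^ n) G) a b" using f(2) unfolding succ_iff by blast
    then show "succ_pair G a b" using In_succG[OF G NL] by blast
  qed
  then show "\<forall>a b. succ_pair (I_infty G) a b \<longrightarrow> succ_pair G a b" .
  show "complete_group (I_infty G)" unfolding complete_group_def
  proof (intro conjI ballI allI impI)
    show "homeo_group (I_infty G)" using I_infty_hg[OF G] .
    show "no_linked_fixed_points (I_infty G)" using NL sp unfolding no_linked_fixed_points_def by blast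
  next
    fix g h assume g: "g \<in> I_infty G" and h: "induced_by h g"
    then obtain n where "g \<in> (I_op ^^ n) G" unfolding I_infty_mem by blast
    then have "h \<in> Ind ((I_op ^^ n) G)" using h unfolding Ind_def by blast
    then have "h \<in> (I_op ^^ Suc n) G" using Ind_sub_I_op by auto
    then show "h \<in> I_infty G" unfolding I_infty_mem by blast
  qed
  show "\<forall>x\<in>{0..1}. {g x | g. g \<in> I_infty G} = {g x | g. g \<in> G}"
  proof (intro ballI equalityI subsetI)
    fix x y assume "y \<in> {g x | g. g \<in> I_infty G}"
    then obtain w where w: "w \<in> I_infty G" "y = w x" by blast
    then obtain n where "w \<in> (I_op ^^ n) G" unfolding I_infty_mem by blast
    then obtain g where "g \<in> G" "w x = g x" using In_orbit[OF G] by blast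
    then show "y \<in> {g x | g. g \<in> G}" using w by blast
  next
    fix x y assume "y \<in> {g x | g. g \<in> G}"
    then show "y \<in> {g x | g. g \<in> I_infty G}" using GI by blast
  qed
  show "\<forall>a b \<tau>. succ_pair G a b \<longrightarrow> rel_transl_number (I_infty G) a b \<tau> \<longrightarrow>
          \<tau> ` stab G a b = \<tau> ` stab (I_infty G) a b"
  proof (intro allI impI equalityI)
    fix a b \<tau> assume s: "succ_pair G a b" and tau: "rel_transl_number (I_infty G) a b \<tau>"
    show "\<tau> ` stab G a b \<subseteq> \<tau> ` stab (I_infty G) a b" using stab_mono[OF GI] by blast
    show "\<tau> ` stab (I_infty G) a b \<subseteq> \<tau> ` stab G a b"
    proof
      fix t assume "t \<in> \<tau> ` stab (I_infty G) a b"
      then obtain w where w: "w \<in> stab (I_infty G) a b" "t = \<tau> w" by blast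
      then obtain n where "w \<in> (I_op ^^ n) G" unfolding stab_def I_infty_mem by blast
      then have "w \<in> stab ((I_op ^^ n) G) a b" using w(1) unfolding stab_def by blast
      then show "t \<in> \<tau> ` stab G a b" using In_transl[OF G NL s tau, of n] w(2) by blast
    qed
  qed
  show "\<forall>H. complete_group H \<longrightarrow> G \<subseteq> H \<longrightarrow> I_infty G \<subseteq> H"
    unfolding I_infty_def using In_sub_complete by blast
qed

end
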